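(* Let $W(x,y)=w(d(x,y))$ be an ultrametric graphon on $[0,1]$ (setting described in the context), $N_k\ge2$, and let $L_r^k$ have eigenvalues $0=\hat\lambda_1\ge\hat\lambda_2\ge\cdots\ge\hat\lambda_{N_k}$. For every $\gamma\in(0,\tfrac12)$ there is a constant $C=C(\gamma)>0$, independent of $k$, such that for each index $i\ge2$, \[ \left|\frac{|\hat\lambda_i|}{N_k}-\sum_{I_m\in\gamma_r(I_n)}\mu(I_m)\Bigl(w(h(I_m))-w(h(I_{F(m)}))\Bigr)\right|\le N_k^{\gamma-\frac12} \] with probability at least $1-2N_ke^{-CN_k^{2\gamma}}$, where $I_n$ is the interval associated with $\hat\lambda_i$, i.e. the interval such that the $i$-th eigenvalue $\lambda_i$ of $L_d^k$ (in nonincreasing order) equals $\lambda(I_n)$.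
   Context: Nested partitions: fix $M\ge1$ and finite partitions $\Upsilon_1,\dots,\Upsilon_M$ of $[0,1]$ into intervals with $\Upsilon_1=\{[0,1]\}$, each interval of $\Upsilon_\ell$ ($\ell<M$) being a disjoint union of at least two intervals of $\Upsilon_{\ell+1}$. For an interval $I$ of the family, $I_{F(m)}$ (or $F(I)$) is the parent interval and $\gamma_r(I)$ the chain of all intervals of the family containing $I$ (including $I$ and $[0,1]$); by convention $w(h(F([0,1])))=0$. Each interval has height $h(I)>0$ with $h(I)<h(J)$ when $I\subsetneq J$; $d(x,x)=0$, $d(x,y)=h(J)$ for $x\ne y$ with $J$ the smallest interval containing both. Ultrametric graphon: $W(x,y)=w(d(x,y))$, $w:[0,\infty)\to[0,1]$ positive; $\mu$ is Lebesgue measure. Sampling: last-level intervals have rational lengths; $N$ = lcm of denominators, $N_k=kN$; each last-level interval $I$ receives $N_k\mu(I)$ equispaced points; $m$ is the counting measure on the sample ($m(I)=N_k\mu(I)$). $L_d^k=A_d^k-D_d^k$ with $A_d^k=(W(x_i,x_j))$ and $D_d^k$ the row-sum diagonal; $L_r^k=A_r^k-D_r^k$ with $A_r^k=(\xi_{ij})$, $\xi_{ij}$ ($i<j$) independent Bernoulli$(W(x_i,x_j))$, symmetric, zero diagonal. The nonzero eigenvalues of $L_d^k$ are $\lambda(I)=-\sum_{J\in\gamma_r(I)}m(J)(w(h(J))-w(h(F(J))))$, $I$ ranging over the intervals of the family. *)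

theory Defs
  imports "HOL-Probability.Probability" "Jordan_Normal_Form.Char_Poly"
begin

definition nondeg_interval :: "real set \<Rightarrow> bool" where
  "nondeg_interval S \<longleftrightarrow> (\<exists>a b. a < b \<and> {a<..<b} \<subseteq> S \<and> S \<subseteq> {a..b})"

definition family :: "nat \<Rightarrow> (nat \<Rightarrow> real set set) \<Rightarrow> real set set" where
  "family M Ups = (\<Union>l\<in>{1..M}. Ups l)"

definition nested_partitions :: "nat \<Rightarrow> (nat \<Rightarrow> real set set) \<Rightarrow> bool" where
  "nested_partitions M Ups \<longleftrightarrow>
     M \<ge> 1 \<and> Ups 1 = {{0..1}} \<and>
     (\<forall>l\<in>{1..M}. finite (Ups l) \<and> (\<forall>I\<in>Ups l. nondeg_interval I) \<and>
        \<Union>(Ups l) = {0..1} \<and> pairwise disjnt (Ups l)) \<and>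
     (\<forall>l\<in>{1..<M}. \<forall>I\<in>Ups l. \<exists>S. S \<subseteq> Ups (Suc l) \<and> card S \<ge> 2 \<and> \<Union>S = I)"

definition ultrametric_setting ::
  "nat \<Rightarrow> (nat \<Rightarrow> real set set) \<Rightarrow> (real set \<Rightarrow> real) \<Rightarrow> (real \<Rightarrow> real) \<Rightarrow> bool" where
  "ultrametric_setting M Ups h w \<longleftrightarrow>
     nested_partitions M Ups \<and>
     (\<forall>I\<in>family M Ups. h I > 0) \<and>
     (\<forall>I\<in>family M Ups. \<forall>J\<in>family M Ups. I \<subset> J \<longrightarrow> h I < h J) \<and>
     (\<forall>t\<ge>0. 0 < w t \<and> w t \<le> 1) \<and>
     (\<forall>I\<in>Ups M. measure lborel I \<in> \<rat>)"

definition parent :: "nat \<Rightarrow> (nat \<Rightarrow> real set set) \<Rightarrow> real set \<Rightarrow> real set" where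
  "parent M Ups I = (THE J. J \<in> family M Ups \<and> I \<subset> J \<and>
       (\<forall>J'\<in>family M Ups. I \<subset> J' \<longrightarrow> J \<subseteq> J'))"

definition w_parent ::
  "nat \<Rightarrow> (nat \<Rightarrow> real set set) \<Rightarrow> (real set \<Rightarrow> real) \<Rightarrow> (real \<Rightarrow> real) \<Rightarrow> real set \<Rightarrow> real" where
  "w_parent M Ups h w I = (if I = {0..1} then 0 else w (h (parent M Ups I)))"

definition chain_above :: "nat \<Rightarrow> (nat \<Rightarrow> real set set) \<Rightarrow> real set \<Rightarrow> real set set" where
  "chain_above M Ups I = {J \<in> family M Ups. I \<subseteq> J}"

definition udist ::
  "nat \<Rightarrow> (nat \<Rightarrow> real set set) \<Rightarrow> (real set \<Rightarrow> real) \<Rightarrow> real \<Rightarrow> real \<Rightarrow> real" where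
  "udist M Ups h x y = (if x = y then 0 else
     h (THE J. J \<in> family M Ups \<and> x \<in> J \<and> y \<in> J \<and>
          (\<forall>J'\<in>family M Ups. x \<in> J' \<and> y \<in> J' \<longrightarrow> J \<subseteq> J')))"

definition graphon ::
  "nat \<Rightarrow> (nat \<Rightarrow> real set set) \<Rightarrow> (real set \<Rightarrow> real) \<Rightarrow> (real \<Rightarrow> real) \<Rightarrow> real \<Rightarrow> real \<Rightarrow> real" where
  "graphon M Ups h w x y = w (udist M Ups h x y)"

definition base_N :: "nat \<Rightarrow> (nat \<Rightarrow> real set set) \<Rightarrow> nat" where
  "base_N M Ups = Lcm ((\<lambda>I. nat (snd (quotient_of (THE q. of_rat q = measure lborel I)))) ` Ups M)"

definition valid_sample :: "nat \<Rightarrow> (nat \<Rightarrow> real set set) \<Rightarrow> nat \<Rightarrow> (nat \<Rightarrow> real) \<Rightarrow> bool" where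
  "valid_sample M Ups n x \<longleftrightarrow> inj_on x {..<n} \<and> (\<forall>i<n. x i \<in> {0..1}) \<and>
     (\<forall>I\<in>Ups M. real (card {i. i < n \<and> x i \<in> I}) = real n * measure lborel I)"

definition laplacian :: "nat \<Rightarrow> (nat \<Rightarrow> nat \<Rightarrow> real) \<Rightarrow> real Matrix.mat" where
  "laplacian n a = Matrix.mat n n (\<lambda>(i,j). a i j - (if i = j then (\<Sum>l<n. a i l) else 0))"

definition L_det ::
  "nat \<Rightarrow> (nat \<Rightarrow> real set set) \<Rightarrow> (real set \<Rightarrow> real) \<Rightarrow> (real \<Rightarrow> real) \<Rightarrow> nat \<Rightarrow> (nat \<Rightarrow> real) \<Rightarrow> real Matrix.mat" where
  "L_det M Ups h w n x = laplacian n (\<lambda>i j. graphon M Ups h w (x i) (x j))"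

definition edge_pmf ::
  "nat \<Rightarrow> (nat \<Rightarrow> real set set) \<Rightarrow> (real set \<Rightarrow> real) \<Rightarrow> (real \<Rightarrow> real) \<Rightarrow> nat \<Rightarrow> (nat \<Rightarrow> real) \<Rightarrow> (nat \<times> nat \<Rightarrow> bool) pmf" where
  "edge_pmf M Ups h w n x = Pi_pmf {(i,j). i < j \<and> j < n} False
      (\<lambda>(i,j). bernoulli_pmf (graphon M Ups h w (x i) (x j)))"

definition adj_of :: "(nat \<times> nat \<Rightarrow> bool) \<Rightarrow> nat \<Rightarrow> nat \<Rightarrow> real" where
  "adj_of f i j = (if i < j then of_bool (f (i,j)) else if j < i then of_bool (f (j,i)) else 0)"

definition L_rand :: "nat \<Rightarrow> (nat \<times> nat \<Rightarrow> bool) \<Rightarrow> real Matrix.mat" where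
  "L_rand n f = laplacian n (adj_of f)"

text \<open>Eigenvalues (with algebraic multiplicity) of a real square matrix whose characteristic
  polynomial splits over the reals, listed in nonincreasing order.\<close>
definition eigs_desc :: "real Matrix.mat \<Rightarrow> real list" where
  "eigs_desc A = (THE ev. length ev = dim_row A \<and> sorted_wrt (\<ge>) ev \<and>
       char_poly A = (\<Prod>a\<leftarrow>ev. [:- a, 1:]))"

definition lam ::
  "nat \<Rightarrow> (nat \<Rightarrow> real set set) \<Rightarrow> (real set \<Rightarrow> real) \<Rightarrow> (real \<Rightarrow> real) \<Rightarrow> nat \<Rightarrow> real set \<Rightarrow> real" where
  "lam M Ups h w n I = - (\<Sum>J\<in>chain_above M Ups I.
       real n * measure lborel J * (w (h J) - w_parent M Ups h w J))"

end

theory Submission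
  imports Defs
begin

lemma sym_real_eigenvector:
  fixes A :: "real mat"
  assumes A: "A \<in> carrier_mat n n" and sym: "\<And>i j. i < n \<Longrightarrow> j < n \<Longrightarrow> A $$ (i,j) = A $$ (j,i)"
    and n: "n > 0"
  shows "\<exists>v \<mu>. v \<in> carrier_vec n \<and> v \<bullet> v = 1 \<and> A *\<^sub>v v = \<mu> \<cdot>\<^sub>v v"
proof -
  define Ac where "Ac = map_mat complex_of_real A"
  have Ac: "Ac \<in> carrier_mat n n" using A unfolding Ac_def by auto
  have "degree (char_poly Ac) = n" using degree_monic_char_poly[OF Ac] by auto
  then have "\<not> constant (poly (char_poly Ac))" using n by (simp add: constant_degree)
  then obtain z where "poly (char_poly Ac) z = 0" using fundamental_theorem_of_algebra by blast
  then have "eigenvalue Ac z" using eigenvalue_root_char_poly[OF Ac] by simp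
  then obtain v where v: "v \<in> carrier_vec n" "v \<noteq> 0\<^sub>v n" "Ac *\<^sub>v v = z \<cdot>\<^sub>v v"
    unfolding eigenvalue_def eigenvector_def using Ac by auto
  have Acv: "(\<Sum>j<n. complex_of_real (A $$ (i,j)) * v $ j) = z * v $ i" if i: "i < n" for i
  proof -
    have "(Ac *\<^sub>v v) $ i = z * v $ i" using v(3) i v(1) by simp
    moreover have "(Ac *\<^sub>v v) $ i = (\<Sum>j<n. complex_of_real (A $$ (i,j)) * v $ j)"
      using i Ac A v(1) unfolding Ac_def
      by (auto simp: scalar_prod_def row_def atLeast0LessThan)
    ultimately show ?thesis by simp
  qed
  define s where "s = (\<Sum>i<n. cnj (v $ i) * (\<Sum>j<n. complex_of_real (A $$ (i,j)) * v $ j))"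
  define N where "N = (\<Sum>i<n. (cmod (v $ i))\<^sup>2)"
  have "s = (\<Sum>i<n. z * (v $ i * cnj (v $ i)))" unfolding s_def using Acv
    by (intro sum.cong) (auto simp: mult_ac)
  also have "\<dots> = z * (\<Sum>i<n. complex_of_real ((cmod (v $ i))\<^sup>2))"
    by (simp only: complex_norm_square sum_distrib_left)
  also have "\<dots> = z * complex_of_real N" unfolding N_def by (simp only: of_real_sum)
  finally have s1: "s = z * complex_of_real N" .
  have "cnj s = (\<Sum>i<n. v $ i * (\<Sum>j<n. complex_of_real (A $$ (i,j)) * cnj (v $ j)))"
    unfolding s_def by (simp add: cnj_sum)
  also have "\<dots> = (\<Sum>i<n. \<Sum>j<n. v $ i * complex_of_real (A $$ (i,j)) * cnj (v $ j))"
    by (simp add: sum_distrib_left mult.assoc)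
  also have "\<dots> = (\<Sum>j<n. \<Sum>i<n. v $ i * complex_of_real (A $$ (i,j)) * cnj (v $ j))"
    by (rule sum.swap)
  also have "\<dots> = s"
    unfolding s_def sum_distrib_left
    by (intro sum.cong refl) (simp add: sym mult.commute mult.left_commute)
  finally have "cnj s = s" .
  then have Ims: "Im s = 0" by (metis Reals_cnj_iff complex_is_Real_iff)
  have "N \<noteq> 0"
  proof
    assume "N = 0"
    then have "\<forall>i\<in>{..<n}. (cmod (v $ i))\<^sup>2 = 0" unfolding N_def
      by (subst sum_nonneg_eq_0_iff[symmetric]) auto
    then have "v = 0\<^sub>v n" using v(1) by (intro eq_vecI) auto
    with v(2) show False by simp
  qed
  then have Imz: "Im z = 0" using Ims s1 by simp
  define r where "r = Re z"
  have zr: "z = complex_of_real r" using Imz unfolding r_def by (simp add: complex_eq_iff)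
  define p where "p = vec n (\<lambda>i. Re (v $ i))"
  define q where "q = vec n (\<lambda>i. Im (v $ i))"
  have pe: "A *\<^sub>v p = r \<cdot>\<^sub>v p"
  proof (rule eq_vecI)
    fix i assume "i < dim_vec (r \<cdot>\<^sub>v p)"
    then have i: "i < n" unfolding p_def by simp
    have "Re (\<Sum>j<n. complex_of_real (A $$ (i,j)) * v $ j) = Re (z * v $ i)" using Acv[OF i] by simp
    then have "(\<Sum>j<n. A $$ (i,j) * Re (v $ j)) = r * Re (v $ i)"
      by (simp add: Re_sum zr)
    then show "(A *\<^sub>v p) $ i = (r \<cdot>\<^sub>v p) $ i"
      using i A unfolding p_def by (simp add: scalar_prod_def row_def atLeast0LessThan)
  qed (use A in \<open>simp add: p_def\<close>)
  have qe: "A *\<^sub>v q = r \<cdot>\<^sub>v q"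
  proof (rule eq_vecI)
    fix i assume "i < dim_vec (r \<cdot>\<^sub>v q)"
    then have i: "i < n" unfolding q_def by simp
    have "Im (\<Sum>j<n. complex_of_real (A $$ (i,j)) * v $ j) = Im (z * v $ i)" using Acv[OF i] by simp
    then have "(\<Sum>j<n. A $$ (i,j) * Im (v $ j)) = r * Im (v $ i)"
      by (simp add: Im_sum zr)
    then show "(A *\<^sub>v q) $ i = (r \<cdot>\<^sub>v q) $ i"
      using i A unfolding q_def by (simp add: scalar_prod_def row_def atLeast0LessThan)
  qed (use A in \<open>simp add: q_def\<close>)
  have "\<exists>u. u \<in> carrier_vec n \<and> u \<noteq> 0\<^sub>v n \<and> A *\<^sub>v u = r \<cdot>\<^sub>v u"
  proof (cases "p = 0\<^sub>v n")
    case False then show ?thesis using pe by (intro exI[of _ p]) (auto simp: p_def)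
  next
    case True
    have "q \<noteq> 0\<^sub>v n"
    proof
      assume "q = 0\<^sub>v n"
      then have "v = 0\<^sub>v n" using v(1) True
      proof (intro eq_vecI)
        fix i assume "q = 0\<^sub>v n" "i < dim_vec (0\<^sub>v n :: complex vec)"
        then have i: "i < n" by simp
        have "Re (v $ i) = 0" using arg_cong[OF True, of "\<lambda>x. x $ i"] i by (simp add: p_def)
        moreover have "Im (v $ i) = 0" using arg_cong[OF \<open>q = 0\<^sub>v n\<close>, of "\<lambda>x. x $ i"] i by (simp add: q_def)
        ultimately show "v $ i = 0\<^sub>v n $ i" using i by (simp add: complex_eq_iff)
      qed (use v(1) in auto)
      with v(2) show False by simp
    qed
    then show ?thesis using qe by (intro exI[of _ q]) (auto simp: q_def)
  qed
  then obtain u where u: "u \<in> carrier_vec n" "u \<noteq> 0\<^sub>v n" "A *\<^sub>v u = r \<cdot>\<^sub>v u" by blast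
  have upos: "u \<bullet> u > 0"
  proof -
    have "u \<bullet> u = (\<Sum>i<n. (u $ i)\<^sup>2)" using u(1) by (simp add: scalar_prod_def atLeast0LessThan power2_eq_square)
    moreover have "\<exists>i<n. u $ i \<noteq> 0"
    proof (rule ccontr)
      assume "\<not> ?thesis" then have "u = 0\<^sub>v n" using u(1) by (intro eq_vecI) auto
      with u(2) show False by simp
    qed
    then obtain i where "i < n" "u $ i \<noteq> 0" by blast
    then have "(\<Sum>i<n. (u $ i)\<^sup>2) > 0"
      by (intro sum_pos2[of _ i]) auto
    ultimately show ?thesis by simp
  qed
  define u' where "u' = (1 / sqrt (u \<bullet> u)) \<cdot>\<^sub>v u"
  have "u' \<bullet> u' = 1" unfolding u'_def using upos u(1)
    by (simp add: smult_scalar_prod_distrib scalar_prod_smult_distrib[of _ n] power2_eq_square[symmetric])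
  moreover have "A *\<^sub>v u' = r \<cdot>\<^sub>v u'" unfolding u'_def using u A
    by (simp add: mult_mat_vec smult_smult_assoc mult.commute)
  moreover have "u' \<in> carrier_vec n" using u(1) unfolding u'_def by simp
  ultimately show ?thesis by blast
qed

lemma sprod_sum: "w \<in> carrier_vec n \<Longrightarrow> v \<bullet> w = (\<Sum>i<n. v $ i * w $ i)"
  by (simp add: scalar_prod_def atLeast0LessThan)

lemma mv_sum: "A \<in> carrier_mat n m \<Longrightarrow> v \<in> carrier_vec m \<Longrightarrow> i < n \<Longrightarrow>
   (A *\<^sub>v v) $ i = (\<Sum>j<m. A $$ (i,j) * v $ j)"
  by (simp add: scalar_prod_def atLeast0LessThan row_def)

lemma mm_sum: "A \<in> carrier_mat n m \<Longrightarrow> B \<in> carrier_mat m p \<Longrightarrow> i < n \<Longrightarrow> j < p \<Longrightarrow>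
   (A * B) $$ (i,j) = (\<Sum>k<m. A $$ (i,k) * B $$ (k,j))"
  by (simp add: scalar_prod_def atLeast0LessThan row_def col_def)

lemma sum_delta_left: "(i::nat) < n \<Longrightarrow> (\<Sum>k<n. (if i = k then 1 else 0) * (f k :: real)) = f i"
proof -
  assume i: "i < n"
  have "(\<Sum>k<n. (if i = k then 1 else 0) * (f k :: real)) = (\<Sum>k<n. if k = i then f k else 0)"
    by (rule sum.cong) auto
  also have "\<dots> = f i" using i by (subst sum.delta) auto
  finally show ?thesis .
qed

lemma sum_delta_right: "(j::nat) < n \<Longrightarrow> (\<Sum>k<n. (f k :: real) * (if k = j then 1 else 0)) = f j"
  using sum_delta_left[of j n f] by (simp add: mult.commute eq_commute)

lemma householder:
  fixes v :: "real vec"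
  assumes v: "v \<in> carrier_vec n" "v \<bullet> v = 1" and n: "n > 0"
  shows "\<exists>H. H \<in> carrier_mat n n \<and> transpose_mat H = H \<and> H * H = 1\<^sub>m n \<and> H *\<^sub>v v = unit_vec n 0"
proof -
  define w where "w = v - unit_vec n 0"
  have w: "w \<in> carrier_vec n" using v unfolding w_def by simp
  have wi: "w $ i = v $ i - (if i = 0 then 1 else 0)" if "i < n" for i
    using that v unfolding w_def by (simp add: unit_vec_def)
  have vv: "(\<Sum>i<n. v $ i * v $ i) = 1" using v sprod_sum[of v n v] by simp
  have sum0: "(\<Sum>i<n. (if i = 0 then 1 else 0) * (f i :: real)) = f 0" for f
    using sum_delta_left[OF n, of f] by (simp add: eq_commute)
  have wv: "w \<bullet> v = 1 - v $ 0"
  proof -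
    have "w \<bullet> v = (\<Sum>i<n. v $ i * v $ i - (if i = 0 then 1 else 0) * v $ i)"
      using v(1) by (simp add: sprod_sum wi algebra_simps)
    also have "\<dots> = 1 - v $ 0" by (simp add: sum_subtractf vv sum0)
    finally show ?thesis .
  qed
  have ww: "w \<bullet> w = 2 - 2 * v $ 0"
  proof -
    have "w \<bullet> w = (\<Sum>i<n. v $ i * v $ i - 2 * ((if i = 0 then 1 else 0) * v $ i) + (if i = 0 then 1 else 0))"
      using w by (intro trans[OF sprod_sum[OF w]] sum.cong refl) (auto simp: wi algebra_simps)
    also have "\<dots> = 2 - 2 * v $ 0"
      by (simp add: sum.distrib sum_subtractf vv sum0 sum_distrib_left[symmetric] n)
    finally show ?thesis .
  qed
  show ?thesis
  proof (cases "w \<bullet> w = 0")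
    case True
    then have v0: "v $ 0 = 1" using ww by simp
    have "v = unit_vec n 0"
    proof (rule eq_vecI)
      fix i assume "i < dim_vec (unit_vec n 0)"
      then have i: "i < n" by simp
      have "(\<Sum>k<n. (w $ k)\<^sup>2) = 0" using True sprod_sum[OF w, of w] by (simp add: power2_eq_square)
      then have "(w $ i)\<^sup>2 = 0" using i
        by (subst (asm) sum_nonneg_eq_0_iff) auto
      then show "v $ i = unit_vec n 0 $ i" using wi[OF i] i by (simp add: unit_vec_def)
    qed (use v in simp)
    then show ?thesis by (intro exI[of _ "1\<^sub>m n"]) auto
  next
    case False
    define c where "c = 2 / (w \<bullet> w)"
    define H where "H = mat n n (\<lambda>(i,j). (if i = j then 1 else 0) - c * w $ i * w $ j)"
    have H: "H \<in> carrier_mat n n" unfolding H_def by simp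
    have Hij: "H $$ (i,j) = (if i = j then 1 else 0) - c * w $ i * w $ j" if "i < n" "j < n" for i j
      using that unfolding H_def by simp
    have cww: "c * (\<Sum>k<n. w $ k * w $ k) = 2" using False sprod_sum[OF w, of w] unfolding c_def by simp
    have "transpose_mat H = H" by (rule eq_matI) (auto simp: H_def)
    moreover have "H * H = 1\<^sub>m n"
    proof (rule eq_matI)
      fix i j assume "i < dim_row (1\<^sub>m n)" "j < dim_col (1\<^sub>m n)"
      then have i: "i < n" and j: "j < n" by auto
      have "(H * H) $$ (i,j) = (\<Sum>k<n. ((if i = k then 1 else 0) - c * w $ i * w $ k) *
                                    ((if k = j then 1 else 0) - c * w $ k * w $ j))"
        using i j by (subst mm_sum[OF H H i j]) (simp add: Hij)
      also have "\<dots> = (\<Sum>k<n. (if i = k then 1 else 0) * ((if k = j then 1 else 0) - c * w $ k * w $ j))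
           - (\<Sum>k<n. (c * w $ i * w $ k) * (if k = j then 1 else 0))
           + (c * c * w $ i * w $ j) * (\<Sum>k<n. w $ k * w $ k)"
        by (simp add: algebra_simps sum.distrib sum_subtractf sum_distrib_left)
      also have "\<dots> = (if i = j then 1 else 0) - c * w $ i * w $ j - c * w $ i * w $ j
            + (c * w $ i * w $ j) * (c * (\<Sum>k<n. w $ k * w $ k))"
        using i j by (simp only: sum_delta_left sum_delta_right) (simp add: algebra_simps)
      also have "\<dots> = 1\<^sub>m n $$ (i,j)" using i j by (simp add: cww)
      finally show "(H * H) $$ (i,j) = 1\<^sub>m n $$ (i,j)" .
    qed (use H in auto)
    moreover have "H *\<^sub>v v = unit_vec n 0"
    proof (rule eq_vecI)
      fix i assume "i < dim_vec (unit_vec n 0)"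
      then have i: "i < n" by simp
      have cwv: "c * (\<Sum>k<n. w $ k * v $ k) = 1"
        using wv ww False sprod_sum[OF v(1), of w] unfolding c_def by (simp add: field_simps)
      have "(H *\<^sub>v v) $ i = (\<Sum>k<n. ((if i = k then 1 else 0) - c * w $ i * w $ k) * v $ k)"
        using i by (subst mv_sum[OF H v(1) i]) (simp add: Hij)
      also have "\<dots> = (\<Sum>k<n. (if i = k then 1 else 0) * v $ k) - w $ i * (c * (\<Sum>k<n. w $ k * v $ k))"
        by (simp add: algebra_simps sum_subtractf sum_distrib_left)
      also have "\<dots> = v $ i - w $ i" using i by (simp only: sum_delta_left cwv)
      also have "\<dots> = unit_vec n 0 $ i" using i by (simp add: wi unit_vec_def)
      finally show "(H *\<^sub>v v) $ i = unit_vec n 0 $ i" .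
    qed (use H in auto)
    ultimately show ?thesis using H by blast
  qed
qed

definition diagm :: "nat \<Rightarrow> (nat \<Rightarrow> real) \<Rightarrow> real mat" where
  "diagm n l = mat n n (\<lambda>(i,j). if i = j then l i else 0)"

lemma diagm_carrier[simp]: "diagm n l \<in> carrier_mat n n" by (simp add: diagm_def)
lemma diagm_dims[simp]: "dim_row (diagm n l) = n" "dim_col (diagm n l) = n" by (simp_all add: diagm_def)

lemma mv_unit: fixes A :: "real mat" shows "A \<in> carrier_mat n n \<Longrightarrow> i < n \<Longrightarrow> j < n \<Longrightarrow> (A *\<^sub>v unit_vec n j) $ i = A $$ (i,j)"
proof -
  assume A: "A \<in> carrier_mat n n" and i: "i < n" and j: "j < n"
  have "(A *\<^sub>v unit_vec n j) $ i = (\<Sum>k<n. A $$ (i,k) * (if k = j then 1 else 0))"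
    using A i by (subst mv_sum[OF A _ i]) (auto simp: unit_vec_def)
  also have "\<dots> = A $$ (i,j)" using j by (rule sum_delta_right)
  finally show ?thesis .
qed

lemma sym_transpose: "A \<in> carrier_mat n n \<Longrightarrow> (\<forall>i<n. \<forall>j<n. A $$ (i,j) = A $$ (j,i)) \<Longrightarrow> transpose_mat A = A"
  by (intro eq_matI) auto

theorem spectral:
  fixes A :: "real mat"
  assumes "A \<in> carrier_mat n n" "\<forall>i<n. \<forall>j<n. A $$ (i,j) = A $$ (j,i)"
  shows "\<exists>U l. U \<in> carrier_mat n n \<and> transpose_mat U * U = 1\<^sub>m n \<and> A = U * diagm n l * transpose_mat U"
  using assms
proof (induction n arbitrary: A)
  case 0
  then show ?case
    by (intro exI[of _ "1\<^sub>m 0"] exI[of _ "\<lambda>_. 0"]) (auto intro!: eq_matI)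
next
  case (Suc m)
  note A = Suc.prems(1)
  have symA: "\<And>i j. i < Suc m \<Longrightarrow> j < Suc m \<Longrightarrow> A $$ (i,j) = A $$ (j,i)" using Suc.prems(2) by blast
  obtain v :: "real vec" and \<mu> where v: "v \<in> carrier_vec (Suc m)" "v \<bullet> v = 1" "A *\<^sub>v v = \<mu> \<cdot>\<^sub>v v"
    using sym_real_eigenvector[OF A symA] by auto
  obtain H where H: "H \<in> carrier_mat (Suc m) (Suc m)" "transpose_mat H = H" "H * H = 1\<^sub>m (Suc m)"
     "H *\<^sub>v v = unit_vec (Suc m) 0"
    using householder[OF v(1,2)] by auto
  define b where "b = H * A * H"
  have b: "b \<in> carrier_mat (Suc m) (Suc m)" unfolding b_def using H A by simp
  have tA: "transpose_mat A = A" using sym_transpose[OF A] Suc.prems(2) by blast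
  have tb: "transpose_mat b = b"
  proof -
    have "transpose_mat b = transpose_mat H * transpose_mat (H * A)"
      unfolding b_def by (rule transpose_mult) (use H A in auto)
    also have "\<dots> = H * (transpose_mat A * transpose_mat H)"
      using H A by (subst transpose_mult[of _ "Suc m" "Suc m"]) auto
    also have "\<dots> = b" unfolding b_def tA H(2) using H A by simp
    finally show ?thesis .
  qed
  have He: "H *\<^sub>v unit_vec (Suc m) 0 = v"
    using H v(1) by (metis H(4) assoc_mult_mat_vec one_mult_mat_vec)
  have be: "b *\<^sub>v unit_vec (Suc m) 0 = \<mu> \<cdot>\<^sub>v unit_vec (Suc m) 0"
  proof -
    have "b *\<^sub>v unit_vec (Suc m) 0 = H *\<^sub>v (A *\<^sub>v (H *\<^sub>v unit_vec (Suc m) 0))"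
      unfolding b_def using H A by (simp add: assoc_mult_mat_vec[of _ "Suc m" "Suc m" _ "Suc m"])
    also have "\<dots> = H *\<^sub>v (\<mu> \<cdot>\<^sub>v v)" using He v(3) by simp
    also have "\<dots> = \<mu> \<cdot>\<^sub>v unit_vec (Suc m) 0" using H v(1) by (simp add: mult_mat_vec)
    finally show ?thesis .
  qed
  have bi0: "b $$ (i,0) = (if i = 0 then \<mu> else 0)" if "i < Suc m" for i
  proof -
    have "(b *\<^sub>v unit_vec (Suc m) 0) $ i = b $$ (i,0)" using mv_unit[OF b that, of 0] by simp
    then show ?thesis using be that by (cases "i = 0") (auto simp: unit_vec_def)
  qed
  have b0j: "b $$ (0,j) = (if j = 0 then \<mu> else 0)" if "j < Suc m" for j
    using bi0[OF that] that arg_cong[OF tb, of "\<lambda>M. M $$ (j,0)"] b by auto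
  define b3 where "b3 = mat m m (\<lambda>(i,j). b $$ (Suc i, Suc j))"
  have b3: "b3 \<in> carrier_mat m m" unfolding b3_def by simp
  have symb3: "\<forall>i<m. \<forall>j<m. b3 $$ (i,j) = b3 $$ (j,i)"
    unfolding b3_def using arg_cong[OF tb, of "\<lambda>M. M $$ (Suc _, Suc _)"] b
    by auto (metis Suc_mono carrier_matD index_transpose_mat(1) tb)
  obtain U3 l3 where U3: "U3 \<in> carrier_mat m m" "transpose_mat U3 * U3 = 1\<^sub>m m"
    "b3 = U3 * diagm m l3 * transpose_mat U3"
    using Suc.IH[OF b3 symb3] by auto
  define M1 where "M1 = mat 1 1 (\<lambda>_. \<mu>)"
  have M1: "M1 \<in> carrier_mat 1 1" unfolding M1_def by simp
  define Uh where "Uh = four_block_mat (1\<^sub>m 1) (0\<^sub>m 1 m) (0\<^sub>m m 1) U3"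
  have Uh: "Uh \<in> carrier_mat (Suc m) (Suc m)" unfolding Uh_def using U3 by auto
  define l where "l = (\<lambda>i. if i = 0 then \<mu> else l3 (i - 1))"
  have Dh: "diagm (Suc m) l = four_block_mat M1 (0\<^sub>m 1 m) (0\<^sub>m m 1) (diagm m l3)"
    by (rule eq_matI) (auto simp: diagm_def M1_def l_def)
  have bblock: "b = four_block_mat M1 (0\<^sub>m 1 m) (0\<^sub>m m 1) b3"
    by (rule eq_matI) (use b bi0 b0j in \<open>auto simp: b3_def M1_def\<close>)
  have tUh: "transpose_mat Uh = four_block_mat (1\<^sub>m 1) (0\<^sub>m 1 m) (0\<^sub>m m 1) (transpose_mat U3)"
    unfolding Uh_def using U3 by (subst transpose_four_block_mat) auto
  have UhUh: "transpose_mat Uh * Uh = 1\<^sub>m (Suc m)"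
    unfolding tUh unfolding Uh_def using U3
    by (subst mult_four_block_mat[of _ 1 1 _ m _ m]) auto
  have P1: "Uh * diagm (Suc m) l = four_block_mat M1 (0\<^sub>m 1 m) (0\<^sub>m m 1) (U3 * diagm m l3)"
    unfolding Dh Uh_def using U3 M1
    by (subst mult_four_block_mat[of _ 1 1 _ m _ m]) (auto intro!: cong_four_block_mat eq_matI)
  have bUh: "b = Uh * diagm (Suc m) l * transpose_mat Uh"
    unfolding P1 tUh bblock using U3 M1
    by (subst mult_four_block_mat[of _ 1 1 _ m _ m]) (auto intro!: cong_four_block_mat eq_matI)
  define U where "U = H * Uh"
  have U: "U \<in> carrier_mat (Suc m) (Suc m)" unfolding U_def using H Uh by simp
  have tU: "transpose_mat U = transpose_mat Uh * H"
    unfolding U_def using H Uh by (simp add: transpose_mult[of _ "Suc m" "Suc m"])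
  have "transpose_mat U * U = 1\<^sub>m (Suc m)"
  proof -
    have tUh': "transpose_mat Uh \<in> carrier_mat (Suc m) (Suc m)" using Uh by simp
    have "transpose_mat U * U = transpose_mat Uh * (H * (H * Uh))"
      unfolding tU unfolding U_def by (rule assoc_mult_mat) (use H Uh in auto)
    also have "H * (H * Uh) = (H * H) * Uh" by (rule assoc_mult_mat[symmetric]) (use H Uh in auto)
    also have "transpose_mat Uh * ((H * H) * Uh) = 1\<^sub>m (Suc m)" using H(3) UhUh Uh by simp
    finally show ?thesis .
  qed
  moreover have "A = U * diagm (Suc m) l * transpose_mat U"
  proof -
    have tUh': "transpose_mat Uh \<in> carrier_mat (Suc m) (Suc m)" using Uh by simp
    have HHX: "H * (H * X) = X" if "X \<in> carrier_mat (Suc m) (Suc m)" for X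
      using that H by (metis assoc_mult_mat left_mult_one_mat)
    have "H * b * H = H * (H * (A * (H * H)))" unfolding b_def using H A
      by (simp add: assoc_mult_mat[of _ "Suc m" "Suc m" _ "Suc m" _ "Suc m"])
    also have "\<dots> = A" using HHX A H by simp
    finally have "A = H * b * H" by simp
    also have "\<dots> = H * (Uh * diagm (Suc m) l * transpose_mat Uh) * H" using bUh by simp
    also have "\<dots> = U * diagm (Suc m) l * transpose_mat U"
      unfolding tU unfolding U_def using H Uh
        mult_carrier_mat[OF Uh diagm_carrier[of "Suc m" l]]
        mult_carrier_mat[OF mult_carrier_mat[OF Uh diagm_carrier[of "Suc m" l]] tUh']
        mult_carrier_mat[OF diagm_carrier[of "Suc m" l] tUh']
        mult_carrier_mat[OF tUh' H(1)]
        mult_carrier_mat[OF H(1) Uh]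
      by (simp add: assoc_mult_mat[of _ "Suc m" "Suc m" _ "Suc m" _ "Suc m"])
    finally show ?thesis .
  qed
  ultimately show ?case using U by blast
qed

lemma prod_list_lin_perm:
  "mset xs = mset ys \<Longrightarrow> (\<Prod>a\<leftarrow>xs. [:- a, 1:]) = (\<Prod>a\<leftarrow>ys. [:- (a::real), 1:])"
proof -
  assume m: "mset xs = mset ys"
  have "(\<Prod>a\<leftarrow>xs. [:- a, 1:]) = prod_mset (mset (map (\<lambda>a. [:- a, 1:]) xs))"
    by (simp only: prod_mset_prod_list)
  also have "\<dots> = prod_mset (mset (map (\<lambda>a. [:- a, 1:]) ys))" by (simp only: mset_map m)
  also have "\<dots> = (\<Prod>a\<leftarrow>ys. [:- a, 1:])" by (simp only: prod_mset_prod_list)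
  finally show ?thesis .
qed

lemma prod_lin_mset:
  fixes xs ys :: "real list"
  shows "(\<Prod>a\<leftarrow>xs. [:- a, 1:]) = (\<Prod>b\<leftarrow>ys. [:- b, 1:]) \<Longrightarrow> mset xs = mset ys"
proof (induction xs arbitrary: ys)
  case Nil
  show ?case
  proof (cases ys)
    case (Cons b ys')
    have "poly (\<Prod>b\<leftarrow>ys. [:- b, 1:]) b = 0" unfolding Cons by (simp add: poly_prod_list)
    with Nil.prems have False by simp
    then show ?thesis ..
  qed simp
next
  case (Cons a xs)
  have "poly (\<Prod>b\<leftarrow>ys. [:- b, 1:]) a = 0" using Cons.prems[symmetric] by (simp add: poly_prod_list)
  then have a: "a \<in> set ys" by (auto simp: poly_prod_list prod_list_zero_iff)
  then have m: "mset ys = mset (a # remove1 a ys)"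
    by (simp only: mset.simps mset_remove1) (rule insert_DiffM[symmetric], simp)
  have "[:- a, 1:] * (\<Prod>b\<leftarrow>xs. [:- b, 1:]) = [:- a, 1:] * (\<Prod>b\<leftarrow>remove1 a ys. [:- b, 1:])"
    using Cons.prems prod_list_lin_perm[OF m] by simp
  then have "(\<Prod>b\<leftarrow>xs. [:- b, 1:]) = (\<Prod>b\<leftarrow>remove1 a ys. [:- b, 1:])"
    by (subst (asm) mult_left_cancel) auto
  from Cons.IH[OF this] have "mset xs = mset (remove1 a ys)" .
  then show ?case using m by (simp only: mset.simps)
qed
lemma eigs_desc_char:
  assumes A: "A \<in> carrier_mat n n" and cp: "char_poly A = (\<Prod>a\<leftarrow>xs. [:- a, 1:])" and len: "length xs = n"
  shows "eigs_desc A = rev (sort xs)"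
  unfolding eigs_desc_def
proof (rule the_equality)
  show "length (rev (sort xs)) = dim_row A \<and> sorted_wrt (\<ge>) (rev (sort xs)) \<and>
        char_poly A = (\<Prod>a\<leftarrow>rev (sort xs). [:- a, 1:])"
    using A len cp by (auto simp: sorted_wrt_rev intro!: prod_list_lin_perm)
next
  fix ev assume ev: "length ev = dim_row A \<and> sorted_wrt (\<ge>) ev \<and> char_poly A = (\<Prod>a\<leftarrow>ev. [:- a, 1:])"
  then have "mset ev = mset xs" using cp prod_lin_mset[of ev xs] by simp
  moreover have "sorted (rev ev)" using ev by (simp add: sorted_wrt_rev)
  ultimately have "sort xs = rev ev" by (intro properties_for_sort) auto
  then show "ev = rev (sort xs)" by simp
qed

theorem spectral_full:
  fixes A :: "real mat"
  assumes A: "A \<in> carrier_mat n n" and sym: "\<forall>i<n. \<forall>j<n. A $$ (i,j) = A $$ (j,i)"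
  shows "\<exists>U l. U \<in> carrier_mat n n \<and> transpose_mat U * U = 1\<^sub>m n \<and> U * transpose_mat U = 1\<^sub>m n
     \<and> A = U * diagm n l * transpose_mat U \<and> eigs_desc A = rev (sort (map l [0..<n]))"
proof -
  obtain U l where U: "U \<in> carrier_mat n n" "transpose_mat U * U = 1\<^sub>m n" "A = U * diagm n l * transpose_mat U"
    using spectral[OF A sym] by blast
  have tU: "transpose_mat U \<in> carrier_mat n n" using U by simp
  have UU: "U * transpose_mat U = 1\<^sub>m n" using mat_mult_left_right_inverse[OF tU U(1) U(2)] .
  have "similar_mat_wit A (diagm n l) U (transpose_mat U)"
    unfolding similar_mat_wit_def using U UU A tU by (auto simp: Let_def)
  then have "similar_mat A (diagm n l)" unfolding similar_mat_def by blast
  then have "char_poly A = char_poly (diagm n l)" by (rule char_poly_similar)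
  also have "\<dots> = (\<Prod>a\<leftarrow>diag_mat (diagm n l). [:- a, 1:])"
    by (rule char_poly_upper_triangular[of _ n]) (auto simp: upper_triangular_def diagm_def)
  also have "diag_mat (diagm n l) = map l [0..<n]"
    by (simp add: diag_mat_def diagm_def)
  finally have "eigs_desc A = rev (sort (map l [0..<n]))"
    using eigs_desc_char[OF A] by simp
  then show ?thesis using U UU by blast
qed

lemma homog_solution:
  fixes a :: "'t \<Rightarrow> 's \<Rightarrow> real"
  assumes "finite T" "finite S" "card T < card S"
  shows "\<exists>c. (\<exists>s\<in>S. c s \<noteq> 0) \<and> (\<forall>t\<in>T. (\<Sum>s\<in>S. a t s * c s) = 0)"
  using assms
proof (induction T arbitrary: S a rule: finite_induct)
  case empty
  then obtain s0 where "s0 \<in> S" by (metis card.empty card_gt_0_iff ex_in_conv)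
  then show ?case by (intro exI[of _ "\<lambda>s. if s = s0 then 1 else 0"]) auto
next
  case (insert t T)
  show ?case
  proof (cases "\<forall>s\<in>S. a t s = 0")
    case True
    have "card T < card S" using insert by simp
    from insert.IH[OF insert.prems(1) this, of a] obtain c where
      c: "\<exists>s\<in>S. c s \<noteq> 0" "\<forall>t\<in>T. (\<Sum>s\<in>S. a t s * c s) = 0" by blast
    then show ?thesis using True by (intro exI[of _ c]) auto
  next
    case False
    then obtain p where p: "p \<in> S" "a t p \<noteq> 0" by blast
    define S' where "S' = S - {p}"
    have fS': "finite S'" using insert.prems unfolding S'_def by simp
    have cS': "card T < card S'" using insert p unfolding S'_def by (simp add: card_Diff_singleton)
    define a' where "a' = (\<lambda>t' s. a t' s - (a t' p / a t p) * a t s)"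
    from insert.IH[OF fS' cS', of a'] obtain c' where
      c': "\<exists>s\<in>S'. c' s \<noteq> 0" "\<forall>t'\<in>T. (\<Sum>s\<in>S'. a' t' s * c' s) = 0" by blast
    define c where "c = c'(p := - (\<Sum>s\<in>S'. a t s * c' s) / a t p)"
    have split: "(\<Sum>s\<in>S. g s) = g p + (\<Sum>s\<in>S'. g s)" for g :: "'s \<Rightarrow> real"
      unfolding S'_def using p insert.prems by (simp add: sum.remove)
    have cS'eq: "(\<Sum>s\<in>S'. h s * c s) = (\<Sum>s\<in>S'. h s * c' s)" for h :: "'s \<Rightarrow> real"
      unfolding c_def S'_def by (intro sum.cong) auto
    have cp: "c p = - (\<Sum>s\<in>S'. a t s * c' s) / a t p" unfolding c_def by simp
    have eq_t: "(\<Sum>s\<in>S. a t s * c s) = 0"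
      using p(2) by (simp only: split cS'eq cp) simp
    have eq_T: "(\<Sum>s\<in>S. a t' s * c s) = 0" if t': "t' \<in> T" for t'
    proof -
      have "(\<Sum>s\<in>S. a t' s * c s) = a t' p * c p + (\<Sum>s\<in>S'. a t' s * c' s)"
        by (simp only: split cS'eq)
      also have "\<dots> = (\<Sum>s\<in>S'. a t' s * c' s) - (a t' p / a t p) * (\<Sum>s\<in>S'. a t s * c' s)"
        unfolding cp by simp
      also have "\<dots> = (\<Sum>s\<in>S'. a' t' s * c' s)"
        unfolding a'_def by (simp add: left_diff_distrib sum_subtractf sum_distrib_left mult.assoc)
      also have "\<dots> = 0" using c'(2) t' by blast
      finally show ?thesis .
    qed
    have "\<exists>s\<in>S. c s \<noteq> 0" using c'(1) unfolding c_def S'_def by auto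
    then show ?thesis using eq_t eq_T by (intro exI[of _ c]) auto
  qed
qed

lemma row_sprod_sum: "M \<in> carrier_mat n k \<Longrightarrow> i < n \<Longrightarrow> w \<in> carrier_vec k \<Longrightarrow>
  Matrix.row M i \<bullet> w = (\<Sum>j<k. M $$ (i,j) * w $ j)"
  by (simp add: scalar_prod_def atLeast0LessThan row_def)

lemma col_sprod_sum: "M \<in> carrier_mat n k \<Longrightarrow> j < k \<Longrightarrow> v \<in> carrier_vec n \<Longrightarrow>
  col M j \<bullet> v = (\<Sum>i<n. M $$ (i,j) * v $ i)"
  by (simp add: scalar_prod_def atLeast0LessThan col_def)

lemma diagm_mult_vec: "c \<in> carrier_vec n \<Longrightarrow> diagm n l *\<^sub>v c = vec n (\<lambda>k. l k * c $ k)"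
proof (rule eq_vecI)
  fix i assume c: "c \<in> carrier_vec n" and "i < dim_vec (vec n (\<lambda>k. l k * c $ k))"
  then have i: "i < n" by simp
  have "(diagm n l *\<^sub>v c) $ i = (\<Sum>j<n. (if i = j then 1 else 0) * (l i * c $ j))"
    using i c by (subst mv_sum[OF diagm_carrier c i]) (auto simp: diagm_def intro!: sum.cong)
  also have "\<dots> = l i * c $ i" using i by (rule sum_delta_left)
  finally show "(diagm n l *\<^sub>v c) $ i = vec n (\<lambda>k. l k * c $ k) $ i" using i by simp
qed auto

lemma adj_sprod:
  fixes M :: "real mat"
  assumes M: "M \<in> carrier_mat n k" and v: "v \<in> carrier_vec n" and w: "w \<in> carrier_vec k"
  shows "v \<bullet> (M *\<^sub>v w) = (transpose_mat M *\<^sub>v v) \<bullet> w"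
proof -
  have "v \<bullet> (M *\<^sub>v w) = (\<Sum>i<n. v $ i * (\<Sum>j<k. M $$ (i,j) * w $ j))"
    using M w v by (simp add: sprod_sum[of _ n] row_sprod_sum)
  also have "\<dots> = (\<Sum>i<n. \<Sum>j<k. v $ i * M $$ (i,j) * w $ j)"
    by (simp add: sum_distrib_left mult.assoc)
  also have "\<dots> = (\<Sum>j<k. \<Sum>i<n. v $ i * M $$ (i,j) * w $ j)" by (rule sum.swap)
  also have "\<dots> = (\<Sum>j<k. (\<Sum>i<n. M $$ (i,j) * v $ i) * w $ j)"
    by (simp add: sum_distrib_left sum_distrib_right mult_ac)
  also have "\<dots> = (transpose_mat M *\<^sub>v v) \<bullet> w"
    using M v w by (simp add: sprod_sum[of _ k] col_sprod_sum[of _ n k])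
  finally show ?thesis .
qed

lemma quad_spectral:
  fixes A U :: "real mat"
  assumes U: "U \<in> carrier_mat n n" and UU: "U * transpose_mat U = 1\<^sub>m n"
    and A: "A = U * diagm n l * transpose_mat U" and v: "v \<in> carrier_vec n"
  shows "v \<bullet> (A *\<^sub>v v) = (\<Sum>k<n. l k * ((transpose_mat U *\<^sub>v v) $ k)\<^sup>2)"
    and "v \<bullet> v = (\<Sum>k<n. ((transpose_mat U *\<^sub>v v) $ k)\<^sup>2)"
proof -
  define c where "c = transpose_mat U *\<^sub>v v"
  have tU: "transpose_mat U \<in> carrier_mat n n" using U by simp
  have c: "c \<in> carrier_vec n" unfolding c_def using tU v by simp
  have "A *\<^sub>v v = U *\<^sub>v (diagm n l *\<^sub>v c)"
    unfolding A c_def using U tU v by (simp add: assoc_mult_mat_vec[of _ n n _ n])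
  have dc: "diagm n l *\<^sub>v c \<in> carrier_vec n" by (rule mult_mat_vec_carrier[OF diagm_carrier c])
  have "v \<bullet> (A *\<^sub>v v) = c \<bullet> (diagm n l *\<^sub>v c)"
    using adj_sprod[OF U v dc] \<open>A *\<^sub>v v = _\<close> unfolding c_def by simp
  also have "\<dots> = (\<Sum>k<n. c $ k * (l k * c $ k))"
    using c by (simp add: diagm_mult_vec sprod_sum[of _ n])
  finally show "v \<bullet> (A *\<^sub>v v) = (\<Sum>k<n. l k * ((transpose_mat U *\<^sub>v v) $ k)\<^sup>2)"
    unfolding c_def by (simp add: power2_eq_square mult_ac)
  have "v = U *\<^sub>v c" unfolding c_def using U tU v UU
    by (metis assoc_mult_mat_vec one_mult_mat_vec)
  then have "v \<bullet> v = c \<bullet> c"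
    using adj_sprod[OF U v c] unfolding c_def by simp
  then show "v \<bullet> v = (\<Sum>k<n. ((transpose_mat U *\<^sub>v v) $ k)\<^sup>2)"
    using c unfolding c_def by (simp add: sprod_sum[of _ n] power2_eq_square)
qed

lemma count_sorted_ge:
  fixes xs :: "real list"
  assumes p: "p < length xs"
  shows "Suc p \<le> card {k. k < length xs \<and> rev (sort xs) ! p \<le> xs ! k}"
proof -
  define ys where "ys = rev (sort xs)"
  have m: "mset ys = mset xs" unfolding ys_def by simp
  have ly: "length ys = length xs" unfolding ys_def by simp
  have sy: "sorted_wrt (\<ge>) ys" unfolding ys_def by (simp add: sorted_wrt_rev)
  have "card {k. k < length xs \<and> ys ! p \<le> xs ! k} = length (filter (\<lambda>x. ys ! p \<le> x) xs)"
    by (simp add: length_filter_conv_card)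
  also have "\<dots> = length (filter (\<lambda>x. ys ! p \<le> x) ys)"
    by (metis m mset_filter size_mset)
  also have "\<dots> = card {k. k < length ys \<and> ys ! p \<le> ys ! k}"
    by (simp add: length_filter_conv_card)
  also have "card {k. k < length ys \<and> ys ! p \<le> ys ! k} \<ge> card {..p}"
  proof (rule card_mono)
    show "{..p} \<subseteq> {k. k < length ys \<and> ys ! p \<le> ys ! k}"
    proof
      fix k assume "k \<in> {..p}"
      then have k: "k \<le> p" by simp
      then have "ys ! p \<le> ys ! k" using sy p ly
        by (cases "k = p") (auto simp: sorted_wrt_iff_nth_less)
      then show "k \<in> {k. k < length ys \<and> ys ! p \<le> ys ! k}" using k p ly by simp
    qed
  qed simp
  finally show ?thesis unfolding ys_def by simp
qed

lemma count_sorted_gt: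
  fixes xs :: "real list"
  assumes p: "p < length xs"
  shows "card {k. k < length xs \<and> rev (sort xs) ! p < xs ! k} \<le> p"
proof -
  define ys where "ys = rev (sort xs)"
  have m: "mset ys = mset xs" unfolding ys_def by simp
  have ly: "length ys = length xs" unfolding ys_def by simp
  have sy: "sorted_wrt (\<ge>) ys" unfolding ys_def by (simp add: sorted_wrt_rev)
  have "card {k. k < length xs \<and> ys ! p < xs ! k} = length (filter (\<lambda>x. ys ! p < x) xs)"
    by (simp add: length_filter_conv_card)
  also have "\<dots> = length (filter (\<lambda>x. ys ! p < x) ys)"
    by (metis m mset_filter size_mset)
  also have "\<dots> = card {k. k < length ys \<and> ys ! p < ys ! k}"
    by (simp add: length_filter_conv_card)
  also have "\<dots> \<le> card {..<p}"
  proof (rule card_mono)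
    show "{k. k < length ys \<and> ys ! p < ys ! k} \<subseteq> {..<p}"
    proof
      fix k assume k: "k \<in> {k. k < length ys \<and> ys ! p < ys ! k}"
      show "k \<in> {..<p}"
      proof (rule ccontr)
        assume "k \<notin> {..<p}"
        then have "p \<le> k" by simp
        then have "ys ! k \<le> ys ! p" using sy k
          by (cases "k = p") (auto simp: sorted_wrt_iff_nth_less)
        with k show False by simp
      qed
    qed
  qed simp
  finally show ?thesis unfolding ys_def by simp
qed

lemma weyl_half:
  fixes A B :: "real mat"
  assumes A: "A \<in> carrier_mat n n" "\<forall>i<n. \<forall>j<n. A $$ (i,j) = A $$ (j,i)"
      and B: "B \<in> carrier_mat n n" "\<forall>i<n. \<forall>j<n. B $$ (i,j) = B $$ (j,i)"
      and pert: "\<forall>v \<in> carrier_vec n. v \<bullet> (A *\<^sub>v v) \<le> v \<bullet> (B *\<^sub>v v) + \<rho> * (v \<bullet> v)"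
      and p: "p < n"
  shows "eigs_desc A ! p \<le> eigs_desc B ! p + \<rho>"
proof -
  obtain U l where U: "U \<in> carrier_mat n n" "transpose_mat U * U = 1\<^sub>m n" "U * transpose_mat U = 1\<^sub>m n"
     "A = U * diagm n l * transpose_mat U" "eigs_desc A = rev (sort (map l [0..<n]))"
    using spectral_full[OF A] by blast
  obtain V m where V: "V \<in> carrier_mat n n" "transpose_mat V * V = 1\<^sub>m n" "V * transpose_mat V = 1\<^sub>m n"
     "B = V * diagm n m * transpose_mat V" "eigs_desc B = rev (sort (map m [0..<n]))"
    using spectral_full[OF B] by blast
  define xs where "xs = map l [0..<n]"
  define ys where "ys = map m [0..<n]"
  define la where "la = rev (sort xs) ! p"
  define mu where "mu = rev (sort ys) ! p"
  define S where "S = {k. k < n \<and> la \<le> l k}"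
  define T where "T = {k. k < n \<and> mu < m k}"
  have "S = {k. k < length xs \<and> rev (sort xs) ! p \<le> xs ! k}"
    unfolding S_def la_def xs_def by auto
  then have cS: "Suc p \<le> card S" using count_sorted_ge[of p xs] p unfolding xs_def by simp
  have "T = {k. k < length ys \<and> rev (sort ys) ! p < ys ! k}"
    unfolding T_def mu_def ys_def by auto
  then have cT: "card T \<le> p" using count_sorted_gt[of p ys] p unfolding ys_def by simp
  have fS: "finite S" and fT: "finite T" unfolding S_def T_def by auto
  define a where "a = (\<lambda>t s. (transpose_mat V * U) $$ (t,s))"
  obtain c where c: "\<exists>s\<in>S. c s \<noteq> 0" "\<forall>t\<in>T. (\<Sum>s\<in>S. a t s * c s) = 0"
    using homog_solution[OF fT fS, of a] cS cT by auto
  define cv where "cv = vec n (\<lambda>k. if k \<in> S then c k else 0)"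
  have cv: "cv \<in> carrier_vec n" unfolding cv_def by simp
  define v where "v = U *\<^sub>v cv"
  have v: "v \<in> carrier_vec n" unfolding v_def using U cv by simp
  have tU: "transpose_mat U \<in> carrier_mat n n" and tV: "transpose_mat V \<in> carrier_mat n n" using U V by auto
  have Uv: "transpose_mat U *\<^sub>v v = cv" unfolding v_def using U tU cv
    by (metis U(2) assoc_mult_mat_vec one_mult_mat_vec)
  have qA: "v \<bullet> (A *\<^sub>v v) = (\<Sum>k<n. l k * (cv $ k)\<^sup>2)" and nA: "v \<bullet> v = (\<Sum>k<n. (cv $ k)\<^sup>2)"
    using quad_spectral[OF U(1) U(3) U(4) v] Uv by auto
  have "(\<Sum>k<n. la * (cv $ k)\<^sup>2) \<le> (\<Sum>k<n. l k * (cv $ k)\<^sup>2)"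
  proof (rule sum_mono)
    fix k assume k: "k \<in> {..<n}"
    show "la * (cv $ k)\<^sup>2 \<le> l k * (cv $ k)\<^sup>2"
    proof (cases "k \<in> S")
      case True then show ?thesis unfolding S_def by (auto intro: mult_right_mono)
    next
      case False then show ?thesis using k unfolding cv_def by simp
    qed
  qed
  then have ge: "la * (v \<bullet> v) \<le> v \<bullet> (A *\<^sub>v v)" unfolding qA nA by (simp add: sum_distrib_left)
  obtain s0 where s0: "s0 \<in> S" "c s0 \<noteq> 0" using c(1) by blast
  have s0n: "s0 < n" using s0 unfolding S_def by simp
  have "0 < (cv $ s0)\<^sup>2" using s0 s0n unfolding cv_def by simp
  also have "\<dots> \<le> (\<Sum>k<n. (cv $ k)\<^sup>2)" using s0n by (intro member_le_sum) auto
  finally have vpos: "0 < v \<bullet> v" unfolding nA .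
  define d where "d = transpose_mat V *\<^sub>v v"
  have dT: "d $ t = 0" if t: "t \<in> T" for t
  proof -
    have tn: "t < n" using t unfolding T_def by simp
    have "d = (transpose_mat V * U) *\<^sub>v cv" unfolding d_def v_def
      by (rule assoc_mult_mat_vec[symmetric]) (use tV U cv in auto)
    then have "d $ t = (\<Sum>k<n. a t k * cv $ k)"
      unfolding a_def using mv_sum[OF mult_carrier_mat[OF tV U(1)] cv tn] by simp
    also have "\<dots> = (\<Sum>k<n. if k \<in> S then a t k * c k else 0)"
      unfolding cv_def by (intro sum.cong) auto
    also have "\<dots> = (\<Sum>k\<in>{..<n} \<inter> S. a t k * c k)" by (simp add: sum.inter_restrict)
    also have "{..<n} \<inter> S = S" unfolding S_def by auto
    also have "(\<Sum>k\<in>S. a t k * c k) = 0" using c(2) t by blast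
    finally show ?thesis .
  qed
  have qB: "v \<bullet> (B *\<^sub>v v) = (\<Sum>k<n. m k * (d $ k)\<^sup>2)" and nB: "v \<bullet> v = (\<Sum>k<n. (d $ k)\<^sup>2)"
    using quad_spectral[OF V(1) V(3) V(4) v] unfolding d_def by auto
  have "(\<Sum>k<n. m k * (d $ k)\<^sup>2) \<le> (\<Sum>k<n. mu * (d $ k)\<^sup>2)"
  proof (rule sum_mono)
    fix k assume k: "k \<in> {..<n}"
    show "m k * (d $ k)\<^sup>2 \<le> mu * (d $ k)\<^sup>2"
    proof (cases "k \<in> T")
      case True then show ?thesis using dT by simp
    next
      case False then have "m k \<le> mu" using k unfolding T_def by auto
      then show ?thesis by (auto intro: mult_right_mono)
    qed
  qed
  then have le: "v \<bullet> (B *\<^sub>v v) \<le> mu * (v \<bullet> v)" unfolding qB nB by (simp add: sum_distrib_left)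
  have "la * (v \<bullet> v) \<le> (mu + \<rho>) * (v \<bullet> v)"
    using ge le pert v by (smt (verit) distrib_right)
  then have "la \<le> mu + \<rho>" using vpos by simp
  then show ?thesis unfolding U(5) V(5) la_def mu_def xs_def ys_def .
qed

lemma weyl:
  fixes A B :: "real mat"
  assumes A: "A \<in> carrier_mat n n" "\<forall>i<n. \<forall>j<n. A $$ (i,j) = A $$ (j,i)"
      and B: "B \<in> carrier_mat n n" "\<forall>i<n. \<forall>j<n. B $$ (i,j) = B $$ (j,i)"
      and pert: "\<forall>v \<in> carrier_vec n. \<bar>v \<bullet> (B *\<^sub>v v) - v \<bullet> (A *\<^sub>v v)\<bar> \<le> \<rho> * (v \<bullet> v)"
      and p: "p < n"
  shows "\<bar>eigs_desc B ! p - eigs_desc A ! p\<bar> \<le> \<rho>"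
proof -
  have "eigs_desc A ! p \<le> eigs_desc B ! p + \<rho>"
    by (rule weyl_half[OF A B _ p]) (use pert in \<open>auto simp: abs_le_iff\<close>)
  moreover have "eigs_desc B ! p \<le> eigs_desc A ! p + \<rho>"
    by (rule weyl_half[OF B A _ p]) (use pert in \<open>auto simp: abs_le_iff\<close>)
  ultimately show ?thesis by linarith
qed

lemma eigs_nonpos:
  fixes A :: "real mat"
  assumes A: "A \<in> carrier_mat n n" "\<forall>i<n. \<forall>j<n. A $$ (i,j) = A $$ (j,i)"
      and nsd: "\<forall>v \<in> carrier_vec n. v \<bullet> (A *\<^sub>v v) \<le> 0"
      and p: "p < n"
  shows "eigs_desc A ! p \<le> 0"
proof -
  have "eigs_desc A ! p \<le> eigs_desc (0\<^sub>m n n) ! p + 0"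
  proof (rule weyl_half[OF A _ _ _ p])
    have z: "(0\<^sub>m n n :: real mat) *\<^sub>v v = 0\<^sub>v n" if "v \<in> carrier_vec n" for v
      using that by (intro eq_vecI) auto
    show "\<forall>v\<in>carrier_vec n. v \<bullet> (A *\<^sub>v v) \<le> v \<bullet> (0\<^sub>m n n *\<^sub>v v) + 0 * (v \<bullet> v)"
      using nsd z by auto
  qed auto
  moreover have "eigs_desc (0\<^sub>m n n :: real mat) = replicate n 0"
  proof -
    have "char_poly (0\<^sub>m n n :: real mat) = (\<Prod>a\<leftarrow>diag_mat (0\<^sub>m n n). [:- a, 1:])"
      by (rule char_poly_upper_triangular[of _ n]) (auto simp: upper_triangular_def)
    also have "diag_mat (0\<^sub>m n n :: real mat) = replicate n 0"
      by (rule nth_equalityI) (auto simp: diag_mat_def)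
    finally show ?thesis using eigs_desc_char[of "0\<^sub>m n n" n "replicate n 0"] by simp
  qed
  ultimately show ?thesis using p by simp
qed

definition bf :: "nat \<Rightarrow> (nat \<Rightarrow> nat \<Rightarrow> real) \<Rightarrow> (nat \<Rightarrow> real) \<Rightarrow> (nat \<Rightarrow> real) \<Rightarrow> real" where
  "bf n X u w = (\<Sum>i<n. \<Sum>j<n. X i j * u i * w j)"

definition nsq :: "nat \<Rightarrow> (nat \<Rightarrow> real) \<Rightarrow> real" where
  "nsq n v = (\<Sum>i<n. (v i)\<^sup>2)"

lemma nsq_nonneg: "0 \<le> nsq n v" unfolding nsq_def by (simp add: sum_nonneg)

lemma bf_sym: "\<forall>i<n. \<forall>j<n. X i j = X j i \<Longrightarrow> bf n X u w = bf n X w u"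
  unfolding bf_def
  by (subst sum.swap) (auto intro!: sum.cong simp: mult_ac)

lemma bf_add_left: "bf n X (\<lambda>i. a i + b i) w = bf n X a w + bf n X b w"
  unfolding bf_def by (simp add: algebra_simps sum.distrib)
lemma bf_add_right: "bf n X u (\<lambda>i. a i + b i) = bf n X u a + bf n X u b"
  unfolding bf_def by (simp add: algebra_simps sum.distrib)
lemma bf_diff_left: "bf n X (\<lambda>i. a i - b i) w = bf n X a w - bf n X b w"
  unfolding bf_def by (simp add: algebra_simps sum_subtractf)
lemma bf_diff_right: "bf n X u (\<lambda>i. a i - b i) = bf n X u a - bf n X u b"
  unfolding bf_def by (simp add: algebra_simps sum_subtractf)
lemma bf_scale_left: "bf n X (\<lambda>i. t * a i) w = t * bf n X a w"
  unfolding bf_def by (simp add: algebra_simps sum_distrib_left)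
lemma bf_scale_right: "bf n X u (\<lambda>i. t * a i) = t * bf n X u a"
  unfolding bf_def by (simp add: algebra_simps sum_distrib_left)

lemma nsq_scale: "nsq n (\<lambda>i. t * a i) = t\<^sup>2 * nsq n a"
  unfolding nsq_def by (simp add: power_mult_distrib sum_distrib_left)

lemma parallelogram: "nsq n (\<lambda>i. a i + c i) + nsq n (\<lambda>i. a i - c i) = 2 * nsq n a + 2 * nsq n c"
proof -
  have "nsq n (\<lambda>i. a i + c i) + nsq n (\<lambda>i. a i - c i) = (\<Sum>i<n. (a i + c i)\<^sup>2 + (a i - c i)\<^sup>2)"
    unfolding nsq_def by (simp add: sum.distrib)
  also have "\<dots> = (\<Sum>i<n. 2 * (a i)\<^sup>2 + 2 * (c i)\<^sup>2)"
    by (intro sum.cong) (auto simp: power2_eq_square algebra_simps)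
  also have "\<dots> = 2 * nsq n a + 2 * nsq n c"
    unfolding nsq_def by (simp add: sum.distrib sum_distrib_left)
  finally show ?thesis .
qed

lemma nsq_add_le: "nsq n (\<lambda>i. a i + c i) \<le> 2 * nsq n a + 2 * nsq n c"
  using parallelogram[of n a c] nsq_nonneg[of n "\<lambda>i. a i - c i"] by linarith

lemma polar:
  assumes sym: "\<forall>i<n. \<forall>j<n. X i j = X j i"
  shows "bf n X (\<lambda>i. a i + c i) (\<lambda>i. a i + c i) - bf n X (\<lambda>i. a i - c i) (\<lambda>i. a i - c i) = 4 * bf n X a c"
  using bf_sym[OF sym, of c a]
  by (simp add: bf_add_left bf_add_right bf_diff_left bf_diff_right)

lemma diffq:
  assumes sym: "\<forall>i<n. \<forall>j<n. X i j = X j i"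
  shows "bf n X v v - bf n X y y = bf n X (\<lambda>i. v i - y i) (\<lambda>i. v i + y i)"
  using bf_sym[OF sym, of v y]
  by (simp add: bf_add_left bf_add_right bf_diff_left bf_diff_right)

lemma nsq_zero: "nsq n v = 0 \<Longrightarrow> bf n X v v = 0"
proof -
  assume "nsq n v = 0"
  then have "\<forall>i\<in>{..<n}. (v i)\<^sup>2 = 0" unfolding nsq_def
    using sum_nonneg_eq_0_iff[of "{..<n}" "\<lambda>i. (v i)\<^sup>2"] by simp
  then show ?thesis unfolding bf_def by simp
qed

definition rz :: "real \<Rightarrow> int" where "rz x = (if 0 \<le> x then \<lfloor>x\<rfloor> else - \<lfloor>- x\<rfloor>)"

definition gscale :: "nat \<Rightarrow> real" where "gscale n = 4 * sqrt (real n)"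

definition rnd :: "nat \<Rightarrow> (nat \<Rightarrow> real) \<Rightarrow> nat \<Rightarrow> real" where
  "rnd n v = (\<lambda>j. if j < n then of_int (rz (v j * gscale n)) / gscale n else 0)"

lemma rz_bounds: "\<bar>of_int (rz x)\<bar> \<le> \<bar>x\<bar>" "\<bar>x - of_int (rz x)\<bar> \<le> 1"
proof -
  have f1: "of_int \<lfloor>x\<rfloor> \<le> x" "x < of_int \<lfloor>x\<rfloor> + 1" by linarith+
  have f2: "of_int \<lfloor>-x\<rfloor> \<le> -x" "-x < of_int \<lfloor>-x\<rfloor> + 1" by linarith+
  have f3: "0 \<le> x \<Longrightarrow> 0 \<le> (of_int \<lfloor>x\<rfloor>::real)" "x < 0 \<Longrightarrow> 0 \<le> (of_int \<lfloor>-x\<rfloor>::real)" by auto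
  show "\<bar>of_int (rz x)\<bar> \<le> \<bar>x\<bar>" "\<bar>x - of_int (rz x)\<bar> \<le> 1"
     apply (simp_all only: rz_def abs_le_iff abs_if[of x] of_int_minus split: if_split)
     apply (intro conjI impI; insert f1 f2 f3; linarith)
    apply (intro conjI impI; insert f1 f2 f3; linarith)
    done
qed

lemma rnd_props:
  assumes n: "n > 0" and j: "j < n"
  shows "\<bar>rnd n v j\<bar> \<le> \<bar>v j\<bar>" "\<bar>v j - rnd n v j\<bar> \<le> 1 / gscale n"
proof -
  have s: "gscale n > 0" using n unfolding gscale_def by simp
  have "\<bar>of_int (rz (v j * gscale n))\<bar> \<le> \<bar>v j\<bar> * gscale n" using rz_bounds(1)[of "v j * gscale n"] s
    by (simp add: abs_mult)
  then show "\<bar>rnd n v j\<bar> \<le> \<bar>v j\<bar>" unfolding rnd_def using j s by (simp add: divide_le_eq abs_divide)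
  have "\<bar>v j * gscale n - of_int (rz (v j * gscale n))\<bar> \<le> 1" by (rule rz_bounds(2))
  then have "\<bar>(v j - rnd n v j) * gscale n\<bar> \<le> 1" unfolding rnd_def using j s by (simp add: algebra_simps)
  then show "\<bar>v j - rnd n v j\<bar> \<le> 1 / gscale n" using s by (simp add: abs_mult le_divide_eq)
qed

lemma rnd_nsq:
  assumes n: "n > 0"
  shows "nsq n (rnd n v) \<le> nsq n v" "nsq n (\<lambda>i. v i - rnd n v i) \<le> 1/16"
proof -
  show "nsq n (rnd n v) \<le> nsq n v" unfolding nsq_def
    by (intro sum_mono) (use rnd_props(1)[OF n] in \<open>auto simp: abs_le_square_iff\<close>)
  have s: "gscale n > 0" using n unfolding gscale_def by simp
  have sq: "(gscale n)\<^sup>2 = 16 * real n" unfolding gscale_def by (simp add: power_mult_distrib)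
  have "nsq n (\<lambda>i. v i - rnd n v i) \<le> (\<Sum>i<n. (1 / gscale n)\<^sup>2)" unfolding nsq_def
  proof (intro sum_mono)
    fix i assume "i \<in> {..<n}"
    then have "\<bar>v i - rnd n v i\<bar> \<le> \<bar>1 / gscale n\<bar>" using rnd_props(2)[OF n, of i v] s by simp
    then show "(v i - rnd n v i)\<^sup>2 \<le> (1 / gscale n)\<^sup>2" by (simp only: abs_le_square_iff)
  qed
  also have "\<dots> = 1/16" using n by (simp add: power_divide sq)
  finally show "nsq n (\<lambda>i. v i - rnd n v i) \<le> 1/16" .
qed

lemma net_extend:
  assumes sym: "\<forall>i<n. \<forall>j<n. X i j = X j i" and n: "n > 0"
    and hyp: "\<forall>v. nsq n v \<le> 1 \<longrightarrow> \<bar>bf n X (rnd n v) (rnd n v)\<bar> \<le> T"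
  shows "\<bar>bf n X v v\<bar> \<le> 2 * T * nsq n v"
proof -
  define K where "K = (\<lambda>v. \<bar>bf n X v v\<bar>) ` {v. nsq n v \<le> 1}"
  define B where "B = (\<Sum>i<n. \<Sum>j<n. \<bar>X i j\<bar>)"
  have bdd: "\<bar>bf n X v v\<bar> \<le> B" if "nsq n v \<le> 1" for v
  proof -
    have vi: "\<bar>v i\<bar> \<le> 1" if "i < n" for i
    proof -
      have "(v i)\<^sup>2 \<le> nsq n v" unfolding nsq_def using that
        by (intro member_le_sum) auto
      then have "(v i)\<^sup>2 \<le> 1" using \<open>nsq n v \<le> 1\<close> by simp
      then show ?thesis by (simp add: abs_square_le_1)
    qed
    have "\<bar>bf n X v v\<bar> \<le> (\<Sum>i<n. \<Sum>j<n. \<bar>X i j * v i * v j\<bar>)" unfolding bf_def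
      by (rule order_trans[OF sum_abs]) (intro sum_mono sum_abs)
    also have "\<dots> \<le> B" unfolding B_def
    proof (intro sum_mono)
      fix i j assume "i \<in> {..<n}" "j \<in> {..<n}"
      then have "\<bar>v i\<bar> * \<bar>v j\<bar> \<le> 1" using vi by (simp add: mult_le_one)
      then show "\<bar>X i j * v i * v j\<bar> \<le> \<bar>X i j\<bar>"
        by (simp add: abs_mult mult.assoc mult_left_le)
    qed
    finally show ?thesis .
  qed
  have "(\<lambda>_. 0) \<in> {v. nsq n v \<le> 1}" by (simp add: nsq_def)
  then have Kne: "K \<noteq> {}" unfolding K_def by blast
  have Kbdd: "bdd_above K" unfolding K_def using bdd by (intro bdd_aboveI[of _ B]) auto
  define S where "S = Sup K"
  have upper: "\<bar>bf n X v v\<bar> \<le> S" if "nsq n v \<le> 1" for v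
    unfolding S_def K_def using that Kbdd unfolding K_def by (intro cSup_upper) auto
  have S0: "0 \<le> S" using upper[of "\<lambda>_. 0"] by (simp add: nsq_def)
  have hom: "\<bar>bf n X v v\<bar> \<le> S * nsq n v" for v
  proof (cases "nsq n v = 0")
    case True then show ?thesis using nsq_zero by simp
  next
    case False
    then have pos: "nsq n v > 0" using nsq_nonneg[of n v] by simp
    define t where "t = 1 / sqrt (nsq n v)"
    have t2: "t\<^sup>2 * nsq n v = 1" unfolding t_def using pos by (simp add: power_divide)
    have "\<bar>bf n X (\<lambda>i. t * v i) (\<lambda>i. t * v i)\<bar> \<le> S"
      by (rule upper) (simp add: nsq_scale t2)
    then have "t\<^sup>2 * \<bar>bf n X v v\<bar> \<le> S"
      by (simp add: bf_scale_left bf_scale_right abs_mult power2_eq_square mult.assoc)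
    then have "t\<^sup>2 * \<bar>bf n X v v\<bar> * nsq n v \<le> S * nsq n v" using pos by (simp add: mult_right_mono)
    moreover have "\<bar>bf n X v v\<bar> = t\<^sup>2 * \<bar>bf n X v v\<bar> * nsq n v"
      using t2 by (metis mult.commute mult.left_commute mult_1_right)
    ultimately show ?thesis by simp
  qed
  have bil: "\<bar>bf n X a c\<bar> \<le> S * (nsq n a + nsq n c) / 2" for a c
  proof -
    define P where "P = bf n X (\<lambda>i. a i + c i) (\<lambda>i. a i + c i)"
    define Q where "Q = bf n X (\<lambda>i. a i - c i) (\<lambda>i. a i - c i)"
    have pq: "P - Q = 4 * bf n X a c" unfolding P_def Q_def by (rule polar[OF sym])
    have h1: "\<bar>P\<bar> \<le> S * nsq n (\<lambda>i. a i + c i)" unfolding P_def by (rule hom)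
    have h2: "\<bar>Q\<bar> \<le> S * nsq n (\<lambda>i. a i - c i)" unfolding Q_def by (rule hom)
    have "4 * \<bar>bf n X a c\<bar> = \<bar>P - Q\<bar>" unfolding pq by (simp add: abs_mult)
    also have "\<dots> \<le> \<bar>P\<bar> + \<bar>Q\<bar>" by (rule abs_triangle_ineq4)
    also have "\<dots> \<le> S * nsq n (\<lambda>i. a i + c i) + S * nsq n (\<lambda>i. a i - c i)" using h1 h2 by (rule add_mono)
    also have "\<dots> = S * (nsq n (\<lambda>i. a i + c i) + nsq n (\<lambda>i. a i - c i))" by (rule distrib_left[symmetric])
    also have "\<dots> = S * (2 * nsq n a + 2 * nsq n c)" by (simp only: parallelogram)
    also have "\<dots> = 4 * (S * (nsq n a + nsq n c) / 2)" by (simp add: algebra_simps)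
    finally show ?thesis by simp
  qed
  have step: "\<bar>bf n X v v\<bar> \<le> T + S / 2" if v: "nsq n v \<le> 1" for v
  proof -
    define y where "y = rnd n v"
    define a where "a = (\<lambda>i. sqrt 8 * (v i - y i))"
    define c where "c = (\<lambda>i. (1 / sqrt 8) * (v i + y i))"
    have "bf n X a c = sqrt 8 * ((1 / sqrt 8) * bf n X (\<lambda>i. v i - y i) (\<lambda>i. v i + y i))"
      unfolding a_def c_def by (simp only: bf_scale_left bf_scale_right)
    also have "\<dots> = bf n X (\<lambda>i. v i - y i) (\<lambda>i. v i + y i)" by simp
    finally have eq: "bf n X v v - bf n X y y = bf n X a c" using diffq[OF sym, of v y] by simp
    have na: "nsq n a = 8 * nsq n (\<lambda>i. v i - y i)" unfolding a_def by (simp add: nsq_scale)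
    have nc: "nsq n c = nsq n (\<lambda>i. v i + y i) / 8"
      unfolding c_def nsq_scale by (simp add: power_divide)
    have "nsq n (\<lambda>i. v i - y i) \<le> 1/16" unfolding y_def using rnd_nsq(2)[OF n] .
    moreover have "nsq n (\<lambda>i. v i + y i) \<le> 4"
      using nsq_add_le[of n v y] rnd_nsq(1)[OF n, of v] v unfolding y_def by linarith
    ultimately have s1: "nsq n a + nsq n c \<le> 1" using na nc by simp
    have "\<bar>bf n X a c\<bar> \<le> S * (nsq n a + nsq n c) / 2" by (rule bil)
    also have "\<dots> \<le> S * 1 / 2" using s1 S0 by (intro divide_right_mono mult_left_mono) auto
    finally have ac: "\<bar>bf n X a c\<bar> \<le> S / 2" by simp
    have "\<bar>bf n X y y\<bar> \<le> T" using hyp v unfolding y_def by blast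
    then show ?thesis using eq ac by linarith
  qed
  have "Sup K \<le> T + S / 2"
    by (rule cSup_least[OF Kne]) (use step in \<open>auto simp: K_def\<close>)
  then have "S \<le> T + S / 2" unfolding S_def .
  then have S2: "S \<le> 2 * T" by simp
  have "\<bar>bf n X v v\<bar> \<le> S * nsq n v" by (rule hom)
  also have "\<dots> \<le> 2 * T * nsq n v" using S2 nsq_nonneg[of n v] by (rule mult_right_mono)
  finally show ?thesis .
qed

lemma hoeff_pi:
  fixes E :: "'e set" and p c :: "'e \<Rightarrow> real"
  assumes fin: "finite E" and p: "\<forall>e\<in>E. 0 \<le> p e \<and> p e \<le> 1" and eps: "\<epsilon> > 0"
    and D: "(\<Sum>e\<in>E. (c e)\<^sup>2) \<le> D" "D > 0"
  shows "measure_pmf.prob (Pi_pmf E dflt (\<lambda>e. bernoulli_pmf (p e)))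
           {f. \<epsilon> \<le> \<bar>\<Sum>e\<in>E. c e * (of_bool (f e) - p e)\<bar>} \<le> 2 * exp (- 2 * \<epsilon>\<^sup>2 / D)"
proof -
  define M where "M = Pi_pmf E dflt (\<lambda>e. bernoulli_pmf (p e))"
  show ?thesis
  proof (cases "(\<Sum>e\<in>E. (c e)\<^sup>2) = 0")
    case True
    then have "\<forall>e\<in>E. (c e)\<^sup>2 = 0" using fin by (subst (asm) sum_nonneg_eq_0_iff) auto
    then have "{f. \<epsilon> \<le> \<bar>\<Sum>e\<in>E. c e * (of_bool (f e) - p e)\<bar>} = {}" using eps by auto
    then show ?thesis by simp
  next
    case False
    then have pos: "(\<Sum>e\<in>E. (c e)\<^sup>2) > 0" by (simp add: order_less_le sum_nonneg)
    define X where "X = (\<lambda>e (f :: 'e \<Rightarrow> bool). c e * of_bool (f e))"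
    have expX: "measure_pmf.expectation M (X e) = c e * p e" if e: "e \<in> E" for e
    proof -
      have "measure_pmf.expectation M (X e) = measure_pmf.expectation (map_pmf (\<lambda>f. f e) M) (\<lambda>b. c e * of_bool b)"
        unfolding X_def by simp
      also have "map_pmf (\<lambda>f. f e) M = bernoulli_pmf (p e)" unfolding M_def using Pi_pmf_component[OF fin, of e dflt "\<lambda>e. bernoulli_pmf (p e)"] e by simp
      also have "measure_pmf.expectation (bernoulli_pmf (p e)) (\<lambda>b. c e * of_bool b) = c e * p e"
        using p e by simp
      finally show ?thesis .
    qed
    interpret H: Hoeffding_ineq "measure_pmf M" E X "\<lambda>e. min 0 (c e)" "\<lambda>e. max 0 (c e)" "\<Sum>e\<in>E. c e * p e"
    proof unfold_locales
      show "finite E" by fact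
      have "prob_space.indep_vars (measure_pmf M) (\<lambda>_. count_space UNIV) (\<lambda>x f. f x) E"
        unfolding M_def by (rule indep_vars_Pi_pmf[OF fin])
      then show "prob_space.indep_vars (measure_pmf M) (\<lambda>_. borel) X E"
        unfolding X_def
        by (rule prob_space.indep_vars_compose2[OF measure_pmf.prob_space_axioms, where Y = "\<lambda>e b. c e * of_bool b"]) auto
      show "AE x in measure_pmf M. X i x \<in> {min 0 (c i)..max 0 (c i)}" for i
        unfolding X_def by auto
      show "(\<Sum>e\<in>E. c e * p e) \<equiv> (\<Sum>i\<in>E. measure_pmf.expectation M (X i))"
        using expX by simp
    qed
    have sq: "(\<Sum>i\<in>E. (max 0 (c i) - min 0 (c i))\<^sup>2) = (\<Sum>e\<in>E. (c e)\<^sup>2)"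
      by (intro sum.cong) (auto simp: max_def min_def power2_eq_square)
    have "measure_pmf.prob M {x \<in> space (measure_pmf M). \<epsilon> \<le> \<bar>(\<Sum>i\<in>E. X i x) - (\<Sum>e\<in>E. c e * p e)\<bar>}
          \<le> 2 * exp (- 2 * \<epsilon>\<^sup>2 / (\<Sum>e\<in>E. (c e)\<^sup>2))"
      using H.Hoeffding_ineq_abs_ge[of \<epsilon>] eps pos unfolding sq by simp
    also have "{x \<in> space (measure_pmf M). \<epsilon> \<le> \<bar>(\<Sum>i\<in>E. X i x) - (\<Sum>e\<in>E. c e * p e)\<bar>}
             = {f. \<epsilon> \<le> \<bar>\<Sum>e\<in>E. c e * (of_bool (f e) - p e)\<bar>}"
      unfolding X_def by (auto simp: sum_subtractf[symmetric] right_diff_distrib)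
    also have "2 * exp (- 2 * \<epsilon>\<^sup>2 / (\<Sum>e\<in>E. (c e)\<^sup>2)) \<le> 2 * exp (- 2 * \<epsilon>\<^sup>2 / D)"
    proof -
      have "2 * \<epsilon>\<^sup>2 / D \<le> 2 * \<epsilon>\<^sup>2 / (\<Sum>e\<in>E. (c e)\<^sup>2)"
        using D pos eps by (intro divide_left_mono) auto
      then show ?thesis by simp
    qed
    finally show ?thesis unfolding M_def .
  qed
qed

lemma laminar:
  assumes np: "nested_partitions M Ups" and l: "1 \<le> l" and ll': "l \<le> l'" and l'M: "l' \<le> M"
    and J: "J \<in> Ups l" and J': "J' \<in> Ups l'" and ne: "J \<inter> J' \<noteq> {}"
  shows "J' \<subseteq> J"
  using ll' l'M J' ne
proof (induction l' arbitrary: J' rule: dec_induct)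
  case base
  have "pairwise disjnt (Ups l)" using np l base(1) unfolding nested_partitions_def by auto
  show ?case
  proof (cases "J = J'")
    case False
    then have "disjnt J J'" using \<open>pairwise disjnt (Ups l)\<close> base(2) J unfolding pairwise_def by blast
    then show ?thesis using base(3) unfolding disjnt_def by blast
  qed simp
next
  case (step k)
  note J'' = step.prems(2)
  obtain p where p: "p \<in> J" "p \<in> J'" using step.prems(3) by blast
  have kM: "k \<in> {1..M}" "Suc k \<in> {1..M}" "k \<in> {1..<M}" using step l by auto
  have "\<Union>(Ups (Suc k)) = {0..1}" using np kM unfolding nested_partitions_def by auto
  then have p01: "p \<in> {0..1}" using J'' p by blast
  have "\<Union>(Ups k) = {0..1}" using np kM unfolding nested_partitions_def by auto
  then obtain K where K: "K \<in> Ups k" "p \<in> K" using p01 by blast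
  obtain S where S: "S \<subseteq> Ups (Suc k)" "\<Union>S = K" using np kM K unfolding nested_partitions_def by blast
  then obtain K'' where K'': "K'' \<in> S" "p \<in> K''" using K by blast
  have "pairwise disjnt (Ups (Suc k))" using np kM unfolding nested_partitions_def by auto
  then have "K'' = J'"
  proof -
    assume pw: "pairwise disjnt (Ups (Suc k))"
    have "K'' \<in> Ups (Suc k)" using K'' S(1) by blast
    show "K'' = J'"
    proof (rule ccontr)
      assume "K'' \<noteq> J'"
      then have "disjnt K'' J'" using pw \<open>K'' \<in> Ups (Suc k)\<close> J'' unfolding pairwise_def by blast
      then show False using K''(2) p(2) unfolding disjnt_def by blast
    qed
  qed
  then have "J' \<subseteq> K" using K'' S by blast
  moreover have "K \<subseteq> J" using step.IH[OF _ K(1)] K(2) p(1) step by auto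
  ultimately show ?case by blast
qed

lemma min_interval:
  assumes np: "nested_partitions M Ups" and x: "x \<in> {0..1}" and y: "y \<in> {0..1}"
  shows "\<exists>!J. J \<in> family M Ups \<and> x \<in> J \<and> y \<in> J \<and> (\<forall>J'\<in>family M Ups. x \<in> J' \<and> y \<in> J' \<longrightarrow> J \<subseteq> J')"
proof -
  define L where "L = {l \<in> {1..M}. \<exists>J\<in>Ups l. x \<in> J \<and> y \<in> J}"
  have M1: "1 \<le> M" and U1: "Ups 1 = {{0..1}}" using np unfolding nested_partitions_def by auto
  have "1 \<in> L" unfolding L_def using M1 U1 x y by auto
  moreover have "finite L" unfolding L_def by simp
  ultimately have l0: "Max L \<in> L" and lmax: "\<And>l. l \<in> L \<Longrightarrow> l \<le> Max L" by (auto intro: Max_in)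
  then obtain J0 where J0: "J0 \<in> Ups (Max L)" "x \<in> J0" "y \<in> J0" and l0M: "Max L \<in> {1..M}"
    unfolding L_def by auto
  have fam: "J0 \<in> family M Ups" using J0 l0M unfolding family_def by blast
  have least: "J0 \<subseteq> J'" if J': "J' \<in> family M Ups" "x \<in> J'" "y \<in> J'" for J'
  proof -
    obtain l' where l': "l' \<in> {1..M}" "J' \<in> Ups l'" using J'(1) unfolding family_def by blast
    then have "l' \<in> L" unfolding L_def using J' by auto
    then have "l' \<le> Max L" by (rule lmax)
    moreover have "J' \<inter> J0 \<noteq> {}" using J' J0 by blast
    ultimately show ?thesis using laminar[OF np _ _ _ l'(2) J0(1)] l' l0M by auto
  qed
  show ?thesis
  proof (rule ex1I[of _ J0])
    show "J0 \<in> family M Ups \<and> x \<in> J0 \<and> y \<in> J0 \<and> (\<forall>J'\<in>family M Ups. x \<in> J' \<and> y \<in> J' \<longrightarrow> J0 \<subseteq> J')"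
      using fam J0 least by auto
  next
    fix J assume "J \<in> family M Ups \<and> x \<in> J \<and> y \<in> J \<and> (\<forall>J'\<in>family M Ups. x \<in> J' \<and> y \<in> J' \<longrightarrow> J \<subseteq> J')"
    then show "J = J0" using least fam J0 by blast
  qed
qed

lemma graphon_range:
  assumes set: "ultrametric_setting M Ups h w" and x: "x \<in> {0..1}" and y: "y \<in> {0..1}"
  shows "0 \<le> graphon M Ups h w x y \<and> graphon M Ups h w x y \<le> 1"
proof (cases "x = y")
  case True
  then show ?thesis using set unfolding graphon_def udist_def ultrametric_setting_def
    by (auto simp: less_imp_le)
next
  case False
  have np: "nested_partitions M Ups" using set unfolding ultrametric_setting_def by simp
  let ?P = "\<lambda>J. J \<in> family M Ups \<and> x \<in> J \<and> y \<in> J \<and> (\<forall>J'\<in>family M Ups. x \<in> J' \<and> y \<in> J' \<longrightarrow> J \<subseteq> J')"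
  have "?P (THE J. ?P J)" by (rule theI'[OF min_interval[OF np x y]])
  then have "(THE J. ?P J) \<in> family M Ups" by simp
  then have "h (THE J. ?P J) > 0" using set unfolding ultrametric_setting_def by blast
  then have "0 < w (h (THE J. ?P J)) \<and> w (h (THE J. ?P J)) \<le> 1"
    using set unfolding ultrametric_setting_def by (meson less_imp_le)
  then show ?thesis using False unfolding graphon_def udist_def by (simp add: less_imp_le)
qed

lemma graphon_sym: "graphon M Ups h w x y = graphon M Ups h w y x"
proof -
  have "(\<lambda>J. J \<in> family M Ups \<and> x \<in> J \<and> y \<in> J \<and> (\<forall>J'\<in>family M Ups. x \<in> J' \<and> y \<in> J' \<longrightarrow> J \<subseteq> J'))
      = (\<lambda>J. J \<in> family M Ups \<and> y \<in> J \<and> x \<in> J \<and> (\<forall>J'\<in>family M Ups. y \<in> J' \<and> x \<in> J' \<longrightarrow> J \<subseteq> J'))"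
    by auto
  then show ?thesis unfolding graphon_def udist_def by (simp add: eq_commute)
qed

lemma lap_carrier[simp]: "laplacian n a \<in> carrier_mat n n"
  by (simp add: laplacian_def)

lemma lap_entry: "i < n \<Longrightarrow> j < n \<Longrightarrow> laplacian n a $$ (i,j) = a i j - (if i = j then (\<Sum>l<n. a i l) else 0)"
  by (simp add: laplacian_def)

lemma lap_sym: "\<forall>i<n. \<forall>j<n. a i j = a j i \<Longrightarrow> \<forall>i<n. \<forall>j<n. laplacian n a $$ (i,j) = laplacian n a $$ (j,i)"
  by (auto simp: lap_entry)

lemma lap_quad:
  assumes v: "v \<in> carrier_vec n"
  shows "v \<bullet> (laplacian n a *\<^sub>v v) = (\<Sum>i<n. \<Sum>j<n. a i j * v $ i * v $ j) - (\<Sum>i<n. (v $ i)\<^sup>2 * (\<Sum>j<n. a i j))"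
proof -
  have row: "(laplacian n a *\<^sub>v v) $ i = (\<Sum>j<n. a i j * v $ j) - (\<Sum>l<n. a i l) * v $ i" if i: "i < n" for i
  proof -
    have "(laplacian n a *\<^sub>v v) $ i = (\<Sum>j<n. (a i j - (if i = j then (\<Sum>l<n. a i l) else 0)) * v $ j)"
      using i by (subst mv_sum[OF lap_carrier v i]) (simp add: lap_entry)
    also have "\<dots> = (\<Sum>j<n. a i j * v $ j - (if i = j then 1 else 0) * ((\<Sum>l<n. a i l) * v $ j))"
      by (intro sum.cong) (auto simp: algebra_simps)
    also have "\<dots> = (\<Sum>j<n. a i j * v $ j) - (\<Sum>j<n. (if i = j then 1 else 0) * ((\<Sum>l<n. a i l) * v $ j))"
      by (rule sum_subtractf)
    also have "(\<Sum>j<n. (if i = j then 1 else 0) * ((\<Sum>l<n. a i l) * v $ j)) = (\<Sum>l<n. a i l) * v $ i"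
      using i by (rule sum_delta_left)
    finally show ?thesis .
  qed
  have "v \<bullet> (laplacian n a *\<^sub>v v) = (\<Sum>i<n. v $ i * (laplacian n a *\<^sub>v v) $ i)"
    by (rule sprod_sum) (rule mult_mat_vec_carrier[OF lap_carrier v])
  also have "\<dots> = (\<Sum>i<n. v $ i * ((\<Sum>j<n. a i j * v $ j) - (\<Sum>l<n. a i l) * v $ i))"
    by (intro sum.cong) (simp_all add: row)
  also have "\<dots> = (\<Sum>i<n. \<Sum>j<n. a i j * v $ i * v $ j) - (\<Sum>i<n. (v $ i)\<^sup>2 * (\<Sum>j<n. a i j))"
    by (simp add: right_diff_distrib sum_subtractf sum_distrib_left sum_distrib_right power2_eq_square mult_ac)
  finally show ?thesis .
qed

lemma lap_nsd:
  assumes sym: "\<forall>i<n. \<forall>j<n. a i j = a j i" and nn: "\<forall>i<n. \<forall>j<n. 0 \<le> a i j" and v: "v \<in> carrier_vec n"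
  shows "v \<bullet> (laplacian n a *\<^sub>v v) \<le> 0"
proof -
  define P where "P = (\<Sum>i<n. \<Sum>j<n. a i j * v $ i * v $ j)"
  define Q where "Q = (\<Sum>i<n. \<Sum>j<n. a i j * (v $ i)\<^sup>2)"
  define Q' where "Q' = (\<Sum>i<n. \<Sum>j<n. a i j * (v $ j)\<^sup>2)"
  have QQ': "Q' = Q" unfolding Q'_def Q_def
    by (subst sum.swap) (use sym in \<open>auto intro!: sum.cong\<close>)
  have "0 \<le> (\<Sum>i<n. \<Sum>j<n. a i j * (v $ i - v $ j)\<^sup>2)"
    using nn by (intro sum_nonneg) auto
  also have "\<dots> = Q - 2 * P + Q'"
    unfolding P_def Q_def Q'_def
    by (simp add: power2_eq_square algebra_simps sum.distrib sum_subtractf sum_distrib_left)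
  finally have "P \<le> Q" using QQ' by simp
  moreover have "v \<bullet> (laplacian n a *\<^sub>v v) = P - Q"
    unfolding lap_quad[OF v] P_def Q_def by (simp add: sum_distrib_right mult_ac)
  ultimately show ?thesis by simp
qed

definition Epairs :: "nat \<Rightarrow> (nat \<times> nat) set" where "Epairs n = {(i,j). i < j \<and> j < n}"

lemma Epairs_finite[simp]: "finite (Epairs n)"
  by (rule finite_subset[of _ "{..<n} \<times> {..<n}"]) (auto simp: Epairs_def)

lemma Epairs_Suc: "Epairs (Suc n) = Epairs n \<union> (\<lambda>i. (i,n)) ` {..<n}"
  by (auto simp: Epairs_def less_Suc_eq)

lemma pair_sum:
  fixes F :: "nat \<Rightarrow> nat \<Rightarrow> real"
  shows "(\<Sum>i<n. \<Sum>j<n. F i j) = (\<Sum>e\<in>Epairs n. F (fst e) (snd e) + F (snd e) (fst e)) + (\<Sum>i<n. F i i)"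
proof (induction n)
  case 0 then show ?case by (simp add: Epairs_def)
next
  case (Suc n)
  have disj: "Epairs n \<inter> (\<lambda>i. (i,n)) ` {..<n} = {}" by (auto simp: Epairs_def)
  have "(\<Sum>e\<in>Epairs (Suc n). F (fst e) (snd e) + F (snd e) (fst e))
      = (\<Sum>e\<in>Epairs n. F (fst e) (snd e) + F (snd e) (fst e)) + (\<Sum>i<n. F i n + F n i)"
    unfolding Epairs_Suc by (subst sum.union_disjoint) (auto simp: disj sum.reindex inj_on_def)
  moreover have "(\<Sum>i<Suc n. \<Sum>j<Suc n. F i j) = (\<Sum>i<n. \<Sum>j<n. F i j) + (\<Sum>i<n. F i n) + (\<Sum>j<n. F n j) + F n n"
    by (simp add: sum.distrib)
  ultimately show ?case using Suc.IH by (simp add: sum.distrib)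
qed

definition Xf :: "(nat \<Rightarrow> nat \<Rightarrow> real) \<Rightarrow> (nat \<times> nat \<Rightarrow> bool) \<Rightarrow> nat \<Rightarrow> nat \<Rightarrow> real" where
  "Xf a f i j = (if i = j then 0 else adj_of f i j - a i j)"

definition PM :: "nat \<Rightarrow> (nat \<Rightarrow> nat \<Rightarrow> real) \<Rightarrow> (nat \<times> nat \<Rightarrow> bool) pmf" where
  "PM n a = Pi_pmf (Epairs n) False (\<lambda>e. bernoulli_pmf (a (fst e) (snd e)))"

lemma Xf_sym: "\<forall>i<n. \<forall>j<n. a i j = a j i \<Longrightarrow> \<forall>i<n. \<forall>j<n. Xf a f i j = Xf a f j i"
  by (auto simp: Xf_def adj_of_def)

lemma xsum:
  assumes sym: "\<forall>i<n. \<forall>j<n. a i j = a j i"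
  shows "(\<Sum>i<n. \<Sum>j<n. K i j * Xf a f i j) =
    (\<Sum>e\<in>Epairs n. (K (fst e) (snd e) + K (snd e) (fst e)) * (of_bool (f e) - a (fst e) (snd e)))"
proof -
  have "(\<Sum>i<n. \<Sum>j<n. K i j * Xf a f i j) =
     (\<Sum>e\<in>Epairs n. K (fst e) (snd e) * Xf a f (fst e) (snd e) + K (snd e) (fst e) * Xf a f (snd e) (fst e))
      + (\<Sum>i<n. K i i * Xf a f i i)"
    by (rule pair_sum)
  also have "(\<Sum>i<n. K i i * Xf a f i i) = 0" by (simp add: Xf_def)
  also have "(\<Sum>e\<in>Epairs n. K (fst e) (snd e) * Xf a f (fst e) (snd e) + K (snd e) (fst e) * Xf a f (snd e) (fst e))
      = (\<Sum>e\<in>Epairs n. (K (fst e) (snd e) + K (snd e) (fst e)) * (of_bool (f e) - a (fst e) (snd e)))"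
  proof (intro sum.cong refl)
    fix e assume e: "e \<in> Epairs n"
    obtain i j where ij: "e = (i,j)" "i < j" "j < n" using e unfolding Epairs_def by auto
    have X1: "Xf a f (fst e) (snd e) = of_bool (f e) - a (fst e) (snd e)"
      and X2: "Xf a f (snd e) (fst e) = of_bool (f e) - a (fst e) (snd e)"
      using ij sym by (auto simp: Xf_def adj_of_def)
    show "K (fst e) (snd e) * Xf a f (fst e) (snd e) + K (snd e) (fst e) * Xf a f (snd e) (fst e)
      = (K (fst e) (snd e) + K (snd e) (fst e)) * (of_bool (f e) - a (fst e) (snd e))"
      by (simp only: X1 X2 distrib_right)
  qed
  finally show ?thesis by simp
qed

lemma row_bad:
  assumes n: "n > 0" and sym: "\<forall>i<n. \<forall>j<n. a i j = a j i"
    and rng: "\<forall>i<n. \<forall>j<n. 0 \<le> a i j \<and> a i j \<le> 1" and r: "r < n" and eps: "\<epsilon> > 0"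
  shows "measure_pmf.prob (PM n a) {f. \<epsilon> \<le> \<bar>\<Sum>j<n. Xf a f r j\<bar>} \<le> 2 * exp (- 2 * \<epsilon>\<^sup>2 / real n)"
proof -
  define K where "K = (\<lambda>i j::nat. if r = i then 1 else (0::real))"
  define c where "c = (\<lambda>e. K (fst e) (snd e) + K (snd e) (fst e))"
  have rowK: "(\<Sum>j<n. Xf a f r j) = (\<Sum>i<n. \<Sum>j<n. K i j * Xf a f i j)" for f
  proof -
    have "(\<Sum>i<n. \<Sum>j<n. K i j * Xf a f i j) = (\<Sum>i<n. (if r = i then 1 else 0) * (\<Sum>j<n. Xf a f i j))"
      unfolding K_def by (intro sum.cong) (auto simp: sum_distrib_left)
    also have "\<dots> = (\<Sum>j<n. Xf a f r j)" using r by (rule sum_delta_left)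
    finally show ?thesis by simp
  qed
  have c01: "c e = 0 \<or> c e = 1" if "e \<in> Epairs n" for e
    using that unfolding c_def K_def Epairs_def by auto
  have "(\<Sum>e\<in>Epairs n. (c e)\<^sup>2) = (\<Sum>e\<in>Epairs n. c e)"
    by (intro sum.cong refl) (use c01 in force)
  also have "\<dots> = (\<Sum>i<n. \<Sum>j<n. K i j) - (\<Sum>i<n. K i i)"
    unfolding c_def using pair_sum[of K n] by simp
  also have "\<dots> \<le> real n"
  proof -
    have "(\<Sum>i<n. \<Sum>j<n. K i j) = real n" unfolding K_def using r
      by (simp add: if_distrib cong: if_cong)
    moreover have "(\<Sum>i<n. K i i) \<ge> 0" unfolding K_def by (simp add: sum_nonneg)
    ultimately show ?thesis by simp
  qed
  finally have cD: "(\<Sum>e\<in>Epairs n. (c e)\<^sup>2) \<le> real n" .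
  have pr: "\<forall>e\<in>Epairs n. 0 \<le> a (fst e) (snd e) \<and> a (fst e) (snd e) \<le> 1" using rng by (auto simp: Epairs_def)
  have "{f. \<epsilon> \<le> \<bar>\<Sum>j<n. Xf a f r j\<bar>} =
        {f. \<epsilon> \<le> \<bar>\<Sum>e\<in>Epairs n. c e * (of_bool (f e) - a (fst e) (snd e))\<bar>}"
    unfolding rowK xsum[OF sym] c_def by simp
  moreover have "measure_pmf.prob (PM n a) {f. \<epsilon> \<le> \<bar>\<Sum>e\<in>Epairs n. c e * (of_bool (f e) - a (fst e) (snd e))\<bar>}
      \<le> 2 * exp (- 2 * \<epsilon>\<^sup>2 / real n)"
    unfolding PM_def
    by (rule hoeff_pi[where p = "\<lambda>e. a (fst e) (snd e)"]) (use pr eps cD n in auto)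
  ultimately show ?thesis by simp
qed

lemma net_bad:
  fixes y :: "nat \<Rightarrow> real"
  assumes n: "n > 0" and sym: "\<forall>i<n. \<forall>j<n. a i j = a j i"
    and rng: "\<forall>i<n. \<forall>j<n. 0 \<le> a i j \<and> a i j \<le> 1" and y: "nsq n y \<le> 1" and T: "T > 0"
  shows "measure_pmf.prob (PM n a) {f. T \<le> \<bar>bf n (Xf a f) y y\<bar>} \<le> 2 * exp (- (T\<^sup>2))"
proof -
  define K where "K = (\<lambda>i j. y i * y j)"
  define c where "c = (\<lambda>e. K (fst e) (snd e) + K (snd e) (fst e))"
  have bfK: "bf n (Xf a f) y y = (\<Sum>i<n. \<Sum>j<n. K i j * Xf a f i j)" for f
    unfolding bf_def K_def by (simp add: mult_ac)
  define F where "F = (\<lambda>i j. (y i)\<^sup>2 * (y j)\<^sup>2)"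
  have "(nsq n y)\<^sup>2 = (\<Sum>i<n. \<Sum>j<n. F i j)"
    unfolding nsq_def F_def by (simp add: power2_eq_square sum_product)
  also have "\<dots> = (\<Sum>e\<in>Epairs n. F (fst e) (snd e) + F (snd e) (fst e)) + (\<Sum>i<n. F i i)"
    by (rule pair_sum)
  finally have eqF: "(nsq n y)\<^sup>2 = (\<Sum>e\<in>Epairs n. F (fst e) (snd e) + F (snd e) (fst e)) + (\<Sum>i<n. F i i)" .
  have "(\<Sum>e\<in>Epairs n. (c e)\<^sup>2) = 2 * (\<Sum>e\<in>Epairs n. F (fst e) (snd e) + F (snd e) (fst e))"
    unfolding c_def K_def F_def sum_distrib_left
    by (intro sum.cong refl) (simp add: power2_eq_square algebra_simps)
  also have "\<dots> \<le> 2 * (nsq n y)\<^sup>2"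
    using eqF by (simp add: F_def sum_nonneg)
  also have "\<dots> \<le> 2"
  proof -
    have "(nsq n y)\<^sup>2 \<le> 1" using y nsq_nonneg[of n y] by (simp add: power_le_one)
    then show ?thesis by simp
  qed
  finally have cD: "(\<Sum>e\<in>Epairs n. (c e)\<^sup>2) \<le> 2" .
  have pr: "\<forall>e\<in>Epairs n. 0 \<le> a (fst e) (snd e) \<and> a (fst e) (snd e) \<le> 1" using rng by (auto simp: Epairs_def)
  have "{f. T \<le> \<bar>bf n (Xf a f) y y\<bar>} =
        {f. T \<le> \<bar>\<Sum>e\<in>Epairs n. c e * (of_bool (f e) - a (fst e) (snd e))\<bar>}"
    unfolding bfK xsum[OF sym] c_def by simp
  moreover have "measure_pmf.prob (PM n a) {f. T \<le> \<bar>\<Sum>e\<in>Epairs n. c e * (of_bool (f e) - a (fst e) (snd e))\<bar>}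
      \<le> 2 * exp (- 2 * T\<^sup>2 / 2)"
    unfolding PM_def
    by (rule hoeff_pi[where p = "\<lambda>e. a (fst e) (snd e)"]) (use pr T cD in auto)
  ultimately show ?thesis by simp
qed

definition NetS :: "nat \<Rightarrow> (nat \<Rightarrow> real) set" where
  "NetS n = (\<lambda>k j. if j < n then of_int (k j) / gscale n else 0) `
      (PiE {..<n} (\<lambda>_. {- \<lfloor>gscale n\<rfloor>..\<lfloor>gscale n\<rfloor>}))"

lemma rnd_in_net:
  assumes n: "n > 0" and v: "nsq n v \<le> 1"
  shows "rnd n v \<in> NetS n"
proof -
  define s where "s = gscale n"
  have s: "s \<ge> 0" unfolding s_def gscale_def by simp
  define k where "k = restrict (\<lambda>j. rz (v j * s)) {..<n}"
  have kb: "k j \<in> {- \<lfloor>s\<rfloor>..\<lfloor>s\<rfloor>}" if j: "j < n" for j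
  proof -
    have "(v j)\<^sup>2 \<le> nsq n v" unfolding nsq_def using j by (intro member_le_sum) auto
    then have "(v j)\<^sup>2 \<le> 1" using v by simp
    then have vj: "\<bar>v j\<bar> \<le> 1" by (simp add: abs_square_le_1)
    have "\<bar>real_of_int (rz (v j * s))\<bar> \<le> \<bar>v j * s\<bar>" by (rule rz_bounds(1))
    also have "\<dots> \<le> s" using vj s by (simp add: abs_mult mult_left_le_one_le)
    finally have "\<bar>real_of_int (rz (v j * s))\<bar> \<le> s" .
    then have "real_of_int (rz (v j * s)) \<le> s" "real_of_int (- rz (v j * s)) \<le> s" by linarith+
    then have "rz (v j * s) \<le> \<lfloor>s\<rfloor>" "- rz (v j * s) \<le> \<lfloor>s\<rfloor>" by (simp_all add: le_floor_iff)
    then show ?thesis unfolding k_def using j by simp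
  qed
  have "k \<in> PiE {..<n} (\<lambda>_. {- \<lfloor>s\<rfloor>..\<lfloor>s\<rfloor>})" unfolding k_def
    using kb unfolding k_def by (auto simp: PiE_def extensional_def Pi_def)
  moreover have "rnd n v = (\<lambda>j. if j < n then of_int (k j) / gscale n else 0)"
    unfolding rnd_def k_def s_def by auto
  ultimately show ?thesis unfolding NetS_def s_def by blast
qed

lemma net_card:
  assumes n: "n > 0"
  shows "finite (NetS n)" "real (card (NetS n)) \<le> (9 * real n) ^ n"
proof -
  define s where "s = gscale n"
  define R where "R = \<lfloor>s\<rfloor>"
  have fin: "finite (PiE {..<n} (\<lambda>_. {- R..R}))" by (intro finite_PiE) auto
  show "finite (NetS n)" unfolding NetS_def using fin unfolding R_def s_def by simp
  have "card (NetS n) \<le> card (PiE {..<n} (\<lambda>_. {- R..R}))"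
    unfolding NetS_def R_def s_def by (rule card_image_le) (use fin in \<open>simp add: R_def s_def\<close>)
  also have "\<dots> = (nat (2 * R + 1)) ^ n" by (simp add: card_PiE)
  finally have c: "real (card (NetS n)) \<le> real (nat (2 * R + 1)) ^ n"
    by (metis of_nat_le_iff of_nat_power)
  have s0: "s \<ge> 0" unfolding s_def gscale_def by simp
  have "real n * 1 \<le> real n * real n" using n by (intro mult_left_mono) auto
  then have "sqrt (real n) \<le> sqrt ((real n)\<^sup>2)" by (intro real_sqrt_le_mono) (simp add: power2_eq_square)
  then have sqn: "sqrt (real n) \<le> real n" by simp
  have "real_of_int R \<le> s" unfolding R_def by simp
  moreover have "s \<le> 4 * real n" unfolding s_def gscale_def using sqn by simp
  moreover have "0 \<le> R" unfolding R_def using s0 by simp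
  ultimately have "real (nat (2 * R + 1)) \<le> 9 * real n" using n by simp
  then have "real (nat (2 * R + 1)) ^ n \<le> (9 * real n) ^ n" by (intro power_mono) auto
  then show "real (card (NetS n)) \<le> (9 * real n) ^ n" by (rule order_trans[OF c])
qed

definition goodf :: "nat \<Rightarrow> (nat \<Rightarrow> nat \<Rightarrow> real) \<Rightarrow> real \<Rightarrow> real \<Rightarrow> (nat \<times> nat \<Rightarrow> bool) \<Rightarrow> bool" where
  "goodf n a \<epsilon> T f \<longleftrightarrow> (\<forall>r<n. \<bar>\<Sum>j<n. Xf a f r j\<bar> < \<epsilon>) \<and>
     (\<forall>y\<in>NetS n. nsq n y \<le> 1 \<longrightarrow> \<bar>bf n (Xf a f) y y\<bar> < T)"

lemma good_prob:
  assumes n: "n > 0" and sym: "\<forall>i<n. \<forall>j<n. a i j = a j i"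
    and rng: "\<forall>i<n. \<forall>j<n. 0 \<le> a i j \<and> a i j \<le> 1" and eps: "\<epsilon> > 0" and T: "T > 0"
  shows "measure_pmf.prob (PM n a) {f. \<not> goodf n a \<epsilon> T f}
     \<le> real n * (2 * exp (- 2 * \<epsilon>\<^sup>2 / real n)) + (9 * real n) ^ n * (2 * exp (- (T\<^sup>2)))"
proof -
  define B where "B = (\<lambda>r. {f. \<epsilon> \<le> \<bar>\<Sum>j<n. Xf a f r j\<bar>})"
  define Y where "Y = NetS n \<inter> {y. nsq n y \<le> 1}"
  define Cy where "Cy = (\<lambda>y. {f. T \<le> \<bar>bf n (Xf a f) y y\<bar>})"
  have fY: "finite Y" unfolding Y_def using net_card(1)[OF n] by simp
  have cY: "real (card Y) \<le> (9 * real n) ^ n"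
  proof -
    have "card Y \<le> card (NetS n)" unfolding Y_def using net_card(1)[OF n] by (intro card_mono) auto
    then show ?thesis using net_card(2)[OF n] by (meson of_nat_le_iff order_trans)
  qed
  have eq: "{f. \<not> goodf n a \<epsilon> T f} = (\<Union>r\<in>{..<n}. B r) \<union> (\<Union>y\<in>Y. Cy y)"
    unfolding goodf_def B_def Y_def Cy_def by (auto simp: not_less)
  let ?P = "measure_pmf.prob (PM n a)"
  have "?P {f. \<not> goodf n a \<epsilon> T f} \<le> ?P (\<Union>r\<in>{..<n}. B r) + ?P (\<Union>y\<in>Y. Cy y)"
    unfolding eq by (rule measure_Un_le) auto
  also have "?P (\<Union>r\<in>{..<n}. B r) \<le> (\<Sum>r<n. ?P (B r))"
    by (rule measure_pmf.finite_measure_subadditive_finite) auto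
  also have "\<dots> \<le> (\<Sum>r<n. 2 * exp (- 2 * \<epsilon>\<^sup>2 / real n))"
    unfolding B_def by (intro sum_mono row_bad[OF n sym rng _ eps]) auto
  also have "?P (\<Union>y\<in>Y. Cy y) \<le> (\<Sum>y\<in>Y. ?P (Cy y))"
    by (rule measure_pmf.finite_measure_subadditive_finite) (use fY in auto)
  also have "\<dots> \<le> (\<Sum>y\<in>Y. 2 * exp (- (T\<^sup>2)))"
    unfolding Cy_def Y_def by (intro sum_mono net_bad[OF n sym rng _ T]) auto
  also have "\<dots> = real (card Y) * (2 * exp (- (T\<^sup>2)))" by simp
  also have "\<dots> \<le> (9 * real n) ^ n * (2 * exp (- (T\<^sup>2)))" using cY by (intro mult_right_mono) auto
  finally show ?thesis by simp
qed

lemma diag_split: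
  fixes D :: "nat \<Rightarrow> nat \<Rightarrow> real"
  assumes i: "i < n"
  shows "(\<Sum>j<n. D i j * g j) = (\<Sum>j<n. (if i = j then 0 else D i j) * g j) + D i i * g i"
proof -
  have "(\<Sum>j<n. D i j * g j) = (\<Sum>j<n. (if i = j then 0 else D i j) * g j + (if i = j then 1 else 0) * (D i j * g j))"
    by (intro sum.cong) auto
  also have "\<dots> = (\<Sum>j<n. (if i = j then 0 else D i j) * g j) + (\<Sum>j<n. (if i = j then 1 else 0) * (D i j * g j))"
    by (rule sum.distrib)
  also have "(\<Sum>j<n. (if i = j then 1 else 0) * (D i j * g j)) = D i i * g i"
    using i by (rule sum_delta_left)
  finally show ?thesis .
qed

lemma lap_quad':
  assumes v: "v \<in> carrier_vec n"
  shows "v \<bullet> (laplacian n b *\<^sub>v v) = (\<Sum>i<n. v $ i * (\<Sum>j<n. b i j * v $ j) - (v $ i)\<^sup>2 * (\<Sum>j<n. b i j))"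
  unfolding lap_quad[OF v] by (simp add: sum_subtractf sum_distrib_left mult_ac)

lemma good_pert:
  assumes n: "n > 0" and sym: "\<forall>i<n. \<forall>j<n. a i j = a j i" and good: "goodf n a \<epsilon> T f"
    and v: "v \<in> carrier_vec n"
  shows "\<bar>v \<bullet> (laplacian n (adj_of f) *\<^sub>v v) - v \<bullet> (laplacian n a *\<^sub>v v)\<bar> \<le> (2 * T + \<epsilon>) * (v \<bullet> v)"
proof -
  define u where "u = (\<lambda>i. v $ i)"
  define X where "X = Xf a f"
  define D where "D = (\<lambda>i j. adj_of f i j - a i j)"
  have XD: "X i j = (if i = j then 0 else D i j)" for i j unfolding X_def D_def Xf_def by simp
  have "v \<bullet> (laplacian n (adj_of f) *\<^sub>v v) - v \<bullet> (laplacian n a *\<^sub>v v)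
      = (\<Sum>i<n. u i * (\<Sum>j<n. D i j * u j) - (u i)\<^sup>2 * (\<Sum>j<n. D i j))"
    unfolding lap_quad'[OF v] u_def D_def sum_subtractf[symmetric]
    by (intro sum.cong refl) (simp add: sum_subtractf algebra_simps)
  also have "\<dots> = (\<Sum>i<n. u i * (\<Sum>j<n. X i j * u j) - (u i)\<^sup>2 * (\<Sum>j<n. X i j))"
  proof (intro sum.cong refl)
    fix i assume "i \<in> {..<n}"
    then have i: "i < n" by simp
    have s1: "(\<Sum>j<n. D i j * u j) = (\<Sum>j<n. X i j * u j) + D i i * u i"
      unfolding XD by (rule diag_split[OF i])
    have s2: "(\<Sum>j<n. D i j) = (\<Sum>j<n. X i j) + D i i"
      using diag_split[OF i, of D "\<lambda>_. 1"] unfolding XD by simp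
    show "u i * (\<Sum>j<n. D i j * u j) - (u i)\<^sup>2 * (\<Sum>j<n. D i j) = u i * (\<Sum>j<n. X i j * u j) - (u i)\<^sup>2 * (\<Sum>j<n. X i j)"
      unfolding s1 s2 by (simp add: algebra_simps power2_eq_square)
  qed
  also have "\<dots> = bf n X u u - (\<Sum>i<n. (u i)\<^sup>2 * (\<Sum>j<n. X i j))"
    unfolding bf_def by (simp add: sum_subtractf sum_distrib_left mult_ac)
  finally have eq: "v \<bullet> (laplacian n (adj_of f) *\<^sub>v v) - v \<bullet> (laplacian n a *\<^sub>v v)
      = bf n X u u - (\<Sum>i<n. (u i)\<^sup>2 * (\<Sum>j<n. X i j))" .
  have symX: "\<forall>i<n. \<forall>j<n. X i j = X j i" unfolding X_def by (rule Xf_sym[OF sym])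
  have hyp: "\<forall>w. nsq n w \<le> 1 \<longrightarrow> \<bar>bf n X (rnd n w) (rnd n w)\<bar> \<le> T"
  proof (intro allI impI)
    fix w assume w: "nsq n w \<le> 1"
    have "rnd n w \<in> NetS n" by (rule rnd_in_net[OF n w])
    moreover have "nsq n (rnd n w) \<le> 1" using rnd_nsq(1)[OF n, of w] w by simp
    ultimately show "\<bar>bf n X (rnd n w) (rnd n w)\<bar> \<le> T" using good unfolding goodf_def X_def by fastforce
  qed
  have b1: "\<bar>bf n X u u\<bar> \<le> 2 * T * nsq n u" by (rule net_extend[OF symX n hyp])
  have "\<bar>\<Sum>i<n. (u i)\<^sup>2 * (\<Sum>j<n. X i j)\<bar> \<le> (\<Sum>i<n. (u i)\<^sup>2 * \<epsilon>)"
  proof -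
    have "\<bar>\<Sum>i<n. (u i)\<^sup>2 * (\<Sum>j<n. X i j)\<bar> \<le> (\<Sum>i<n. \<bar>(u i)\<^sup>2 * (\<Sum>j<n. X i j)\<bar>)" by (rule sum_abs)
    also have "\<dots> \<le> (\<Sum>i<n. (u i)\<^sup>2 * \<epsilon>)"
    proof (intro sum_mono)
      fix i assume "i \<in> {..<n}"
      then have "\<bar>\<Sum>j<n. X i j\<bar> < \<epsilon>" using good unfolding goodf_def X_def by auto
      then show "\<bar>(u i)\<^sup>2 * (\<Sum>j<n. X i j)\<bar> \<le> (u i)\<^sup>2 * \<epsilon>"
        by (simp add: abs_mult mult_left_mono)
    qed
    finally show ?thesis .
  qed
  then have b2: "\<bar>\<Sum>i<n. (u i)\<^sup>2 * (\<Sum>j<n. X i j)\<bar> \<le> \<epsilon> * nsq n u"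
    unfolding nsq_def by (simp add: sum_distrib_left mult_ac)
  have vv: "v \<bullet> v = nsq n u" unfolding nsq_def u_def using v by (simp add: sprod_sum power2_eq_square)
  have "\<bar>bf n X u u - (\<Sum>i<n. (u i)\<^sup>2 * (\<Sum>j<n. X i j))\<bar> \<le> 2 * T * nsq n u + \<epsilon> * nsq n u"
    using b1 b2 by linarith
  then show ?thesis unfolding eq vv by (simp add: algebra_simps)
qed

lemma asym:
  fixes g :: real assumes g: "0 < g" "g < 1/2"
  shows "\<exists>C>0. \<forall>n::nat. 2 \<le> n \<longrightarrow> (1 - 2 * real n * exp (- C * real n powr (2*g)) \<le> 0 \<or>
      2 * real n * exp (- (real n powr (2*g)) / 2) + 2 * (9 * real n) ^ n * exp (- (real n powr (1 + 2*g)) / 16)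
        \<le> 2 * real n * exp (- C * real n powr (2*g)))"
proof -
  define N0 where "N0 = max 8 ((576/g) powr (1/g))"
  define C where "C = min (1/4) (1/(2*N0))"
  have N0: "N0 \<ge> 8" unfolding N0_def by simp
  have C: "C > 0" "C \<le> 1/4" "C \<le> 1/(2*N0)" unfolding C_def using N0 by auto
  show ?thesis
  proof (intro exI[of _ C] conjI allI impI)
    show "C > 0" by (rule C(1))
    fix n :: nat assume n2: "2 \<le> n"
    define r where "r = real n"
    have r1: "r \<ge> 1" "r > 0" using n2 unfolding r_def by auto
    define a where "a = r powr (2*g)"
    have a1: "a \<ge> 1" unfolding a_def using r1 g by (intro ge_one_powr_ge_zero) auto
    show "1 - 2 * real n * exp (- C * real n powr (2*g)) \<le> 0 \<or>
      2 * real n * exp (- (real n powr (2*g)) / 2) + 2 * (9 * real n) ^ n * exp (- (real n powr (1 + 2*g)) / 16)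
        \<le> 2 * real n * exp (- C * real n powr (2*g))"
    proof (cases "r < N0")
      case True
      have "a \<le> r powr 1" unfolding a_def using r1 g by (intro powr_mono) auto
      then have ar: "a \<le> r" using r1 by simp
      have "C * a \<le> (1/(2*N0)) * a" using C a1 by (intro mult_right_mono) auto
      also have "\<dots> \<le> (1/(2*N0)) * r" using ar N0 by (intro mult_left_mono) auto
      also have "\<dots> < 1/2" using True N0 by (simp add: field_simps)
      finally have Ca: "C * a < 1/2" .
      have "1/2 \<le> exp (-1/2::real)" using exp_ge_add_one_self[of "-1/2::real"] by simp
      also have "exp (-1/2::real) \<le> exp (- C * a)" using Ca by simp
      finally have "1/2 \<le> exp (- C * a)" .
      then have "r * (1/2) \<le> r * exp (- C * a)" using r1 by (intro mult_left_mono) auto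
      moreover have "r \<ge> 2" using n2 unfolding r_def by simp
      ultimately have "1 \<le> 2 * (r * exp (- C * a))" by linarith
      then have "1 \<le> 2 * r * exp (- C * a)" by (simp only: mult.assoc)
      then show ?thesis unfolding r_def a_def by simp
    next
      case False
      then have r8: "r \<ge> 8" and rN: "r \<ge> (576/g) powr (1/g)" unfolding N0_def by auto
      define m where "m = r powr g"
      have "m \<ge> ((576/g) powr (1/g)) powr g" unfolding m_def using rN g by (intro powr_mono2) auto
      also have "((576/g) powr (1/g)) powr g = 576 / g" using g by (simp add: powr_powr)
      finally have m576: "m \<ge> 576 / g" .
      have m0: "m \<ge> 0" unfolding m_def by simp
      have am: "a = m * m" unfolding a_def m_def by (simp add: powr_add[symmetric])
      have "ln (9 * r) \<le> (9 * r) powr g / g" using r1 g by (intro ln_powr_bound) auto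
      also have "(9 * r) powr g = 9 powr g * m" unfolding m_def using r1 by (simp add: powr_mult)
      also have "9 powr g \<le> (9::real) powr 1" using g by (intro powr_mono) auto
      then have "9 powr g * m / g \<le> 9 * m / g" using m0 g by (simp add: divide_right_mono mult_right_mono)
      finally have ln9: "ln (9 * r) \<le> 9 * m / g" by simp
      have "18 * m / g = m * (576 / g) / 32" by (simp add: field_simps)
      also have "\<dots> \<le> m * m / 32" using m576 m0 by (intro divide_right_mono mult_left_mono) auto
      finally have "2 * ln (9 * r) \<le> a / 32" using ln9 am by simp
      then have "r * (2 * ln (9 * r)) \<le> r * (a / 32)" using r1 by (intro mult_left_mono) auto
      then have s1: "2 * r * ln (9 * r) \<le> r * a / 32" by (simp add: mult_ac)
      have "8 * a \<le> r * a" using r8 a1 by (intro mult_right_mono) auto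
      then have s2: "a / 4 \<le> r * a / 32" by simp
      have key: "2 * r * ln (9 * r) + a / 4 \<le> r * a / 16" using s1 s2 by simp
      have lnpos: "0 \<le> ln (9 * r)" using r1 by simp
      have "5 * (9 * r) ^ n \<le> (9 * r) * (9 * r) ^ n" using r1 by (intro mult_right_mono) auto
      also have "\<dots> = (9 * r) ^ Suc n" by simp
      also have "\<dots> = exp (real (Suc n) * ln (9 * r))"
        by (subst exp_of_nat_mult) (use r1 in simp)
      also have "\<dots> \<le> exp (2 * r * ln (9 * r))"
      proof -
        have "real (Suc n) * ln (9 * r) \<le> (2 * r) * ln (9 * r)"
          by (rule mult_right_mono) (use n2 lnpos in \<open>auto simp: r_def\<close>)
        then show ?thesis by simp
      qed
      finally have p5: "5 * (9 * r) ^ n \<le> exp (2 * r * ln (9 * r))" .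
      have rp: "real n powr (1 + 2*g) = r * a" unfolding r_def a_def using r1 unfolding r_def
        by (simp add: powr_add)
      have "5 * ((9 * r) ^ n * exp (- (r * a) / 16)) \<le> exp (2 * r * ln (9 * r)) * exp (- (r * a) / 16)"
        using p5 by (simp add: mult.assoc[symmetric])
      also have "\<dots> = exp (2 * r * ln (9 * r) - r * a / 16)" by (simp add: exp_add[symmetric])
      also have "\<dots> \<le> exp (- a / 4)" using key by simp
      finally have b2: "(9 * r) ^ n * exp (- (r * a) / 16) \<le> exp (- a / 4) / 5" by simp
      have "exp (- a / 4) \<le> exp (-1/4::real)" using a1 by simp
      also have "exp (-1/4::real) \<le> 4/5"
      proof -
        have "5/4 \<le> exp (1/4::real)" using exp_ge_add_one_self[of "1/4::real"] by simp
        then show ?thesis by (simp add: exp_minus field_simps)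
      qed
      finally have e45: "exp (- a / 4) \<le> 4/5" .
      have "exp (- a / 2) = exp (- a / 4) * exp (- a / 4)" by (simp add: exp_add[symmetric])
      also have "\<dots> \<le> exp (- a / 4) * (4/5)" using e45 by (intro mult_left_mono) auto
      finally have b1: "exp (- a / 2) \<le> exp (- a / 4) * (4/5)" .
      have "2 * r * exp (- a / 2) + 2 * ((9 * r) ^ n * exp (- (r * a) / 16))
          \<le> 2 * r * (exp (- a / 4) * (4/5)) + 2 * (exp (- a / 4) / 5)"
        using b1 b2 r1 by (intro add_mono mult_left_mono) auto
      also have "\<dots> \<le> 2 * r * (exp (- a / 4) * (4/5)) + 2 * r * (exp (- a / 4) / 5)"
        using r1 by (intro add_mono mult_right_mono) auto
      also have "\<dots> = 2 * r * exp (- a / 4)" by (simp add: field_simps)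
      also have "\<dots> \<le> 2 * r * exp (- C * a)"
        using C a1 r1 by (intro mult_left_mono) (auto intro: mult_right_mono)
      finally have "2 * r * exp (- a / 2) + 2 * (9 * r) ^ n * exp (- (r * a) / 16) \<le> 2 * r * exp (- C * a)"
        by (simp add: mult.assoc)
      then show ?thesis unfolding rp unfolding r_def a_def by simp
    qed
  qed
qed

theorem corollary6p4:
  fixes M :: nat and Ups :: "nat \<Rightarrow> real set set"
    and h :: "real set \<Rightarrow> real" and w :: "real \<Rightarrow> real" and \<gamma> :: real
  assumes setting: "ultrametric_setting M Ups h w"
    and gam: "0 < \<gamma>" "\<gamma> < 1/2"
  shows "\<exists>C>0. \<forall>k::nat. \<forall>x :: nat \<Rightarrow> real. \<forall>i::nat. \<forall>I.
    (let Nk = k * base_N M Ups in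
      Nk \<ge> 2 \<longrightarrow> valid_sample M Ups Nk x \<longrightarrow> 2 \<le> i \<longrightarrow> i \<le> Nk \<longrightarrow>
      I \<in> family M Ups \<longrightarrow>
      eigs_desc (L_det M Ups h w Nk x) ! (i - 1) = lam M Ups h w Nk I \<longrightarrow>
      measure_pmf.prob (edge_pmf M Ups h w Nk x)
        {f. \<bar>\<bar>eigs_desc (L_rand Nk f) ! (i - 1)\<bar> / real Nk
             - (\<Sum>J\<in>chain_above M Ups I.
                  measure lborel J * (w (h J) - w_parent M Ups h w J))\<bar>
            \<le> real Nk powr (\<gamma> - 1/2)}
      \<ge> 1 - 2 * real Nk * exp (- C * real Nk powr (2 * \<gamma>)))"
proof -
  obtain C where C: "C > 0" and Cn: "\<And>n::nat. 2 \<le> n \<Longrightarrow> (1 - 2 * real n * exp (- C * real n powr (2*\<gamma>)) \<le> 0 \<or>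
      2 * real n * exp (- (real n powr (2*\<gamma>)) / 2) + 2 * (9 * real n) ^ n * exp (- (real n powr (1 + 2*\<gamma>)) / 16)
        \<le> 2 * real n * exp (- C * real n powr (2*\<gamma>)))"
    using asym[OF gam] by blast
  show ?thesis
  proof (intro exI[of _ C] conjI allI)
    show "C > 0" by (rule C)
    fix k :: nat and x :: "nat \<Rightarrow> real" and i :: nat and I
    define n where "n = k * base_N M Ups"
    have imp: "1 - 2 * real n * exp (- C * real n powr (2 * \<gamma>)) \<le> measure_pmf.prob (edge_pmf M Ups h w n x)
        {f. \<bar>\<bar>eigs_desc (L_rand n f) ! (i - 1)\<bar> / real n
             - (\<Sum>J\<in>chain_above M Ups I.
                  measure lborel J * (w (h J) - w_parent M Ups h w J))\<bar>
            \<le> real n powr (\<gamma> - 1/2)}"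
      if n2: "n \<ge> 2" and vs: "valid_sample M Ups n x" and i2: "2 \<le> i" and iN: "i \<le> n"
        and IF: "I \<in> family M Ups" and ev: "eigs_desc (L_det M Ups h w n x) ! (i - 1) = lam M Ups h w n I"
    proof -
      have n: "n > 0" using n2 by simp
      define a where "a = (\<lambda>i j. graphon M Ups h w (x i) (x j))"
      have sym: "\<forall>i<n. \<forall>j<n. a i j = a j i" unfolding a_def by (simp add: graphon_sym)
      have x01: "x i \<in> {0..1}" if "i < n" for i using vs that unfolding valid_sample_def by auto
      have rng: "\<forall>i<n. \<forall>j<n. 0 \<le> a i j \<and> a i j \<le> 1"
        unfolding a_def using graphon_range[OF setting] x01 by blast
      have pmf: "edge_pmf M Ups h w n x = PM n a"
        unfolding edge_pmf_def PM_def Epairs_def a_def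
        by (rule arg_cong[where f = "Pi_pmf _ False"]) (auto simp: case_prod_beta)
      have Ld: "L_det M Ups h w n x = laplacian n a" unfolding L_det_def a_def ..
      define \<rho> where "\<rho> = real n powr (1/2 + \<gamma>)"
      define \<epsilon> where "\<epsilon> = \<rho> / 2"
      define T where "T = \<rho> / 4"
      have rho: "\<rho> > 0" unfolding \<rho>_def using n by simp
      have eps: "\<epsilon> > 0" and T: "T > 0" unfolding \<epsilon>_def T_def using rho by auto
      define p where "p = i - 1"
      have p: "p < n" unfolding p_def using iN i2 by simp
      define S where "S = (\<Sum>J\<in>chain_above M Ups I. measure lborel J * (w (h J) - w_parent M Ups h w J))"
      have lamS: "lam M Ups h w n I = - (real n * S)"
        unfolding lam_def S_def by (simp add: sum_distrib_left mult.assoc)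
      have Ldc: "laplacian n a \<in> carrier_mat n n" by simp
      have Ldsym: "\<forall>i<n. \<forall>j<n. laplacian n a $$ (i,j) = laplacian n a $$ (j,i)" by (rule lap_sym[OF sym])
      have lam0: "lam M Ups h w n I \<le> 0"
        unfolding ev[symmetric] Ld p_def[symmetric]
        by (rule eigs_nonpos[OF Ldc Ldsym _ p]) (use lap_nsd[OF sym] rng in auto)
      have good_sub: "{f. goodf n a \<epsilon> T f} \<subseteq>
        {f. \<bar>\<bar>eigs_desc (L_rand n f) ! (i - 1)\<bar> / real n - S\<bar> \<le> real n powr (\<gamma> - 1/2)}"
      proof
        fix f assume "f \<in> {f. goodf n a \<epsilon> T f}"
        then have g: "goodf n a \<epsilon> T f" by simp
        have adjsym: "\<forall>i<n. \<forall>j<n. adj_of f i j = adj_of f j i" by (auto simp: adj_of_def)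
        have adjnn: "\<forall>i<n. \<forall>j<n. 0 \<le> adj_of f i j" by (auto simp: adj_of_def)
        have Lrc: "laplacian n (adj_of f) \<in> carrier_mat n n" by simp
        have Lrsym: "\<forall>i<n. \<forall>j<n. laplacian n (adj_of f) $$ (i,j) = laplacian n (adj_of f) $$ (j,i)"
          by (rule lap_sym[OF adjsym])
        have pert: "\<forall>v\<in>carrier_vec n. \<bar>v \<bullet> (laplacian n (adj_of f) *\<^sub>v v) - v \<bullet> (laplacian n a *\<^sub>v v)\<bar> \<le> \<rho> * (v \<bullet> v)"
          using good_pert[OF n sym g] unfolding \<epsilon>_def T_def by (simp add: field_simps)
        have W: "\<bar>eigs_desc (laplacian n (adj_of f)) ! p - eigs_desc (laplacian n a) ! p\<bar> \<le> \<rho>"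
          by (rule weyl[OF Ldc Ldsym Lrc Lrsym pert p])
        have hat0: "eigs_desc (laplacian n (adj_of f)) ! p \<le> 0"
          by (rule eigs_nonpos[OF Lrc Lrsym _ p]) (use lap_nsd[OF adjsym adjnn] in auto)
        define lh where "lh = eigs_desc (laplacian n (adj_of f)) ! p"
        have evp: "eigs_desc (laplacian n a) ! p = - (real n * S)" using ev lamS unfolding Ld p_def by simp
        have "\<bar>\<bar>lh\<bar> / real n - S\<bar> = \<bar>lh - (- (real n * S))\<bar> / real n"
          using hat0 n unfolding lh_def by (simp add: field_simps abs_divide)
        also have "\<dots> \<le> \<rho> / real n" using W evp unfolding lh_def by (simp add: divide_right_mono)
        also have "\<rho> / real n = real n powr (\<gamma> - 1/2)"
        proof -
          have "real n powr ((1/2 + \<gamma>) - 1) = real n powr (1/2 + \<gamma>) / real n powr 1" by (rule powr_diff)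
          moreover have "(1/2 + \<gamma>) - 1 = \<gamma> - 1/2" by simp
          moreover have "real n powr 1 = real n" using n by simp
          ultimately show ?thesis unfolding \<rho>_def by simp
        qed
        finally show "f \<in> {f. \<bar>\<bar>eigs_desc (L_rand n f) ! (i - 1)\<bar> / real n - S\<bar> \<le> real n powr (\<gamma> - 1/2)}"
          unfolding lh_def L_rand_def p_def by simp
      qed
      let ?P = "measure_pmf.prob (PM n a)"
      have bad: "?P {f. \<not> goodf n a \<epsilon> T f}
          \<le> 2 * real n * exp (- (real n powr (2*\<gamma>)) / 2) + 2 * (9 * real n) ^ n * exp (- (real n powr (1 + 2*\<gamma>)) / 16)"
      proof -
        have "\<rho>\<^sup>2 = real n powr ((1/2 + \<gamma>) + (1/2 + \<gamma>))"
          unfolding \<rho>_def power2_eq_square by (rule powr_add[symmetric])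
        also have "(1/2 + \<gamma>) + (1/2 + \<gamma>) = 1 + 2*\<gamma>" by simp
        finally have r2': "\<rho>\<^sup>2 = real n powr (1 + 2*\<gamma>)" .
        have "real n powr (1 + 2*\<gamma>) = real n powr 1 * real n powr (2*\<gamma>)" by (rule powr_add)
        also have "real n powr 1 = real n" using n by simp
        finally have r3: "real n powr (1 + 2*\<gamma>) = real n * real n powr (2*\<gamma>)" .
        have e1: "- 2 * \<epsilon>\<^sup>2 / real n = - (real n powr (2*\<gamma>)) / 2"
        proof -
          have "- 2 * \<epsilon>\<^sup>2 / real n = - (\<rho>\<^sup>2 / real n) / 2" unfolding \<epsilon>_def by (simp add: power_divide)
          also have "\<rho>\<^sup>2 / real n = real n powr (2*\<gamma>)" unfolding r2' r3 using n by simp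
          finally show ?thesis by simp
        qed
        have e2: "- (T\<^sup>2) = - (real n powr (1 + 2*\<gamma>)) / 16"
          unfolding T_def r2'[symmetric] by (simp add: power_divide)
        have "?P {f. \<not> goodf n a \<epsilon> T f} \<le> real n * (2 * exp (- 2 * \<epsilon>\<^sup>2 / real n)) + (9 * real n) ^ n * (2 * exp (- (T\<^sup>2)))"
          by (rule good_prob[OF n sym rng eps T])
        also have "\<dots> = 2 * real n * exp (- (real n powr (2*\<gamma>)) / 2) + 2 * (9 * real n) ^ n * exp (- (real n powr (1 + 2*\<gamma>)) / 16)"
          unfolding e1 e2 by (simp only: mult_ac)
        finally show ?thesis .
      qed
      have "1 - ?P {f. \<not> goodf n a \<epsilon> T f} = ?P {f. goodf n a \<epsilon> T f}"
      proof -
        have "{f. goodf n a \<epsilon> T f} = space (measure_pmf (PM n a)) - {f. \<not> goodf n a \<epsilon> T f}" by auto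
        then show ?thesis using measure_pmf.prob_compl[of "{f. \<not> goodf n a \<epsilon> T f}" "PM n a"] by simp
      qed
      also have "\<dots> \<le> ?P {f. \<bar>\<bar>eigs_desc (L_rand n f) ! (i - 1)\<bar> / real n - S\<bar> \<le> real n powr (\<gamma> - 1/2)}"
        by (rule measure_pmf.finite_measure_mono[OF good_sub]) simp
      finally have main: "1 - ?P {f. \<not> goodf n a \<epsilon> T f} \<le>
          ?P {f. \<bar>\<bar>eigs_desc (L_rand n f) ! (i - 1)\<bar> / real n - S\<bar> \<le> real n powr (\<gamma> - 1/2)}" by simp
      have final: "1 - 2 * real n * exp (- C * real n powr (2 * \<gamma>)) \<le>
          ?P {f. \<bar>\<bar>eigs_desc (L_rand n f) ! (i - 1)\<bar> / real n - S\<bar> \<le> real n powr (\<gamma> - 1/2)}"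
      proof (cases "1 - 2 * real n * exp (- C * real n powr (2*\<gamma>)) \<le> 0")
        case True
        then show ?thesis by (meson measure_nonneg order_trans)
      next
        case False
        then have "2 * real n * exp (- (real n powr (2*\<gamma>)) / 2) + 2 * (9 * real n) ^ n * exp (- (real n powr (1 + 2*\<gamma>)) / 16)
          \<le> 2 * real n * exp (- C * real n powr (2*\<gamma>))" using Cn[OF n2] by blast
        then show ?thesis using main bad by linarith
      qed
      then show ?thesis unfolding pmf S_def[symmetric] .
    qed
    then show "let Nk = k * base_N M Ups in
      Nk \<ge> 2 \<longrightarrow> valid_sample M Ups Nk x \<longrightarrow> 2 \<le> i \<longrightarrow> i \<le> Nk \<longrightarrow>
      I \<in> family M Ups \<longrightarrow>
      eigs_desc (L_det M Ups h w Nk x) ! (i - 1) = lam M Ups h w Nk I \<longrightarrow>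
      measure_pmf.prob (edge_pmf M Ups h w Nk x)
        {f. \<bar>\<bar>eigs_desc (L_rand Nk f) ! (i - 1)\<bar> / real Nk
             - (\<Sum>J\<in>chain_above M Ups I.
                  measure lborel J * (w (h J) - w_parent M Ups h w J))\<bar>
            \<le> real Nk powr (\<gamma> - 1/2)}
      \<ge> 1 - 2 * real Nk * exp (- C * real Nk powr (2 * \<gamma>))"
      unfolding Let_def n_def[symmetric] by blast
  qed
qed

end
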